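(* Let $n>k\ge1$ be coprime integers, $\eta$ in the upper half-plane, $\Lambda=\mathbb{Z}+\mathbb{Z}\eta$, $E=\mathbb{C}/\Lambda$, and let $N\in\mathrm{GL}(V)$ be $N(x_\alpha)=x_{-\alpha}$. For all $\tau\in\mathbb{C}$, $N$ extends to algebra isomorphisms $S_{n,k}(E,\tau)\to S_{n,k}(E,-\tau)$ and $S_{n,k}(E,\tau)\to S_{n,k}(E,\tau)^{\mathrm{op}}$. In particular $S_{n,k}(E,\tau)\cong S_{n,k}(E,\tau)^{\mathrm{op}}=S_{n,k}(E,-\tau)$ (the latter equality as quotients of the tensor algebra $TV$).
   Context: Write $e(z)=e^{2\pi i z}$ and $\theta(z)=\sum_{m\in\mathbb{Z}}(-1)^m e\big(mz+\tfrac12 m(m-1)\eta\big)$. For $\alpha\in\mathbb{Z}$ put $\theta_\alpha(z)=e\big(\alpha z+\tfrac{\alpha}{2n}+\tfrac{\alpha(\alpha-n)}{2n}\eta\big)\prod_{m=0}^{n-1}\theta\big(z+\tfrac mn+\tfrac{\alpha}{n}\eta\big)$, regarded as indexed by $\alpha\in\mathbb{Z}_n$. Let $V$ be an $n$-dimensional complex vector space with basis $x_i$, $i\in\mathbb{Z}_n$, and $TV$ its tensor algebra. For $\tau\in\mathbb{C}\setminus\frac1n\Lambda$ and $z\in\mathbb{C}$, define $R_\tau(z)\in\mathrm{End}(V\otimes V)$ by $$R_\tau(z)(x_i\otimes x_j)=\frac{\theta_0(-z)\cdots\theta_{n-1}(-z)}{\theta_1(0)\cdots\theta_{n-1}(0)}\sum_{r\in\mathbb{Z}_n}\frac{\theta_{j-i+r(k-1)}(-z+\tau)}{\theta_{j-i-r}(-z)\,\theta_{kr}(\tau)}\,x_{j-r}\otimes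 x_{i+r}.$$ Define $S_{n,k}(E,\tau):=TV/(\ker R_\tau(\tau))$ for $\tau\notin\frac1n\Lambda$; for $\tau\in\frac1n\Lambda$, $R_\tau(\tau)$ is replaced by $R_+(\tau):=\lim_{t\to0}R_t(t+\tau)$. *)

theory Defs
  imports "HOL-Analysis.Analysis"
begin

definition e :: "complex \<Rightarrow> complex" where
  "e z = exp (2 * of_real pi * \<i> * z)"

definition theta :: "complex \<Rightarrow> complex \<Rightarrow> complex" where
  "theta \<eta> z = infsum (\<lambda>m::int. ((-1::complex) powi m) *
      e (of_int m * z + of_int m * (of_int m - 1) / 2 * \<eta>)) UNIV"

text \<open>theta_alpha for alpha in Z (it is n-periodic in alpha, so indexed by Z_n)\<close>
definition theta_a :: "nat \<Rightarrow> complex \<Rightarrow> int \<Rightarrow> complex \<Rightarrow> complex" where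
  "theta_a n \<eta> \<alpha> z =
     e (of_int \<alpha> * z + of_int \<alpha> / (2 * of_nat n)
        + of_int (\<alpha> * (\<alpha> - int n)) / (2 * of_nat n) * \<eta>)
     * (\<Prod>m<n. theta \<eta> (z + of_nat m / of_nat n + of_int \<alpha> / of_nat n * \<eta>))"

definition lat_n :: "nat \<Rightarrow> complex \<Rightarrow> complex set" where
  "lat_n n \<eta> = {(of_int a + of_int b * \<eta>) / of_nat n | a b. True}"

definition Rpref :: "nat \<Rightarrow> complex \<Rightarrow> complex \<Rightarrow> complex" where
  "Rpref n \<eta> z = (\<Prod>a<n. theta_a n \<eta> (int a) (- z)) / (\<Prod>a\<in>{1..<n}. theta_a n \<eta> (int a) 0)"

text \<open>Matrix entry of R_tau(z): coefficient of x_a \<otimes> x_b in R_tau(z)(x_i \<otimes> x_j),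
  for a b i j in {0..<n} representing Z_n.  The summand with index r contributes
  to x_(j-r) \<otimes> x_(i+r); for given (a,b,i,j) the only possible r is r = b - i (mod n),
  and then a = j - r requires a + b = i + j (mod n).\<close>
definition Rent :: "nat \<Rightarrow> nat \<Rightarrow> complex \<Rightarrow> complex \<Rightarrow> complex \<Rightarrow> nat \<Rightarrow> nat \<Rightarrow> nat \<Rightarrow> nat \<Rightarrow> complex" where
  "Rent n k \<eta> \<tau> z a b i j =
     (if (a + b) mod n = (i + j) mod n then
        (let r = int b - int i in
          Rpref n \<eta> z * theta_a n \<eta> (int j - int i + r * (int k - 1)) (- z + \<tau>)
           / (theta_a n \<eta> (int j - int i - r) (- z) * theta_a n \<eta> (int k * r) \<tau>))
      else 0)"

text \<open>The operator defining the relations: R_tau(tau) for tau not in (1/n)Lambda,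
  and R_+(tau) = lim_{t->0} R_t(t + tau) (entrywise) otherwise.\<close>
definition Rrel :: "nat \<Rightarrow> nat \<Rightarrow> complex \<Rightarrow> complex \<Rightarrow> nat \<Rightarrow> nat \<Rightarrow> nat \<Rightarrow> nat \<Rightarrow> complex" where
  "Rrel n k \<eta> \<tau> =
     (if \<tau> \<in> lat_n n \<eta> then (\<lambda>a b i j. Lim (at 0) (\<lambda>t. Rent n k \<eta> t (t + \<tau>) a b i j))
      else Rent n k \<eta> \<tau> \<tau>)"

text \<open>Elements of TV are finitely supported coefficient functions on words over the
  basis indices {0..<n} (= Z_n); the word [i1,...,im] stands for x_i1 \<otimes> ... \<otimes> x_im.\<close>
definition TV :: "nat \<Rightarrow> (nat list \<Rightarrow> complex) set" where
  "TV n = {f. finite {w. f w \<noteq> 0} \<and> (\<forall>w. f w \<noteq> 0 \<longrightarrow> (\<forall>x\<in>set w. x < n))}"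

definition tmul :: "(nat list \<Rightarrow> complex) \<Rightarrow> (nat list \<Rightarrow> complex) \<Rightarrow> nat list \<Rightarrow> complex" where
  "tmul f g w = (\<Sum>i\<le>length w. f (take i w) * g (drop i w))"

definition xgen :: "nat \<Rightarrow> nat list \<Rightarrow> complex" where
  "xgen \<alpha> = (\<lambda>w. if w = [\<alpha>] then 1 else 0)"

definition tone :: "nat list \<Rightarrow> complex" where
  "tone = (\<lambda>w. if w = [] then 1 else 0)"

definition kerR :: "nat \<Rightarrow> nat \<Rightarrow> complex \<Rightarrow> complex \<Rightarrow> (nat list \<Rightarrow> complex) set" where
  "kerR n k \<eta> \<tau> = {f \<in> TV n. (\<forall>w. f w \<noteq> 0 \<longrightarrow> length w = 2) \<and>
      (\<forall>a<n. \<forall>b<n. (\<Sum>i<n. \<Sum>j<n. Rrel n k \<eta> \<tau> a b i j * f [i, j]) = 0)}"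

inductive_set gen_ideal :: "nat \<Rightarrow> (nat list \<Rightarrow> complex) set \<Rightarrow> (nat list \<Rightarrow> complex) set"
  for n K where
  gen: "x \<in> K \<Longrightarrow> x \<in> gen_ideal n K"
| zero: "(\<lambda>_. 0) \<in> gen_ideal n K"
| add: "x \<in> gen_ideal n K \<Longrightarrow> y \<in> gen_ideal n K \<Longrightarrow> (\<lambda>w. x w + y w) \<in> gen_ideal n K"
| lmul: "x \<in> gen_ideal n K \<Longrightarrow> t \<in> TV n \<Longrightarrow> tmul t x \<in> gen_ideal n K"
| rmul: "x \<in> gen_ideal n K \<Longrightarrow> t \<in> TV n \<Longrightarrow> tmul x t \<in> gen_ideal n K"

definition Sideal :: "nat \<Rightarrow> nat \<Rightarrow> complex \<Rightarrow> complex \<Rightarrow> (nat list \<Rightarrow> complex) set" where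
  "Sideal n k \<eta> \<tau> = gen_ideal n (kerR n k \<eta> \<tau>)"

definition qcls :: "nat \<Rightarrow> (nat list \<Rightarrow> complex) set \<Rightarrow> (nat list \<Rightarrow> complex) \<Rightarrow> (nat list \<Rightarrow> complex) set" where
  "qcls n I f = {g \<in> TV n. (\<lambda>w. f w - g w) \<in> I}"

definition qcar :: "nat \<Rightarrow> (nat list \<Rightarrow> complex) set \<Rightarrow> (nat list \<Rightarrow> complex) set set" where
  "qcar n I = qcls n I ` TV n"

definition qrep :: "(nat list \<Rightarrow> complex) set \<Rightarrow> nat list \<Rightarrow> complex" where
  "qrep A = (SOME f. f \<in> A)"

definition qadd where
  "qadd n I A B = qcls n I (\<lambda>w. qrep A w + qrep B w)"

definition qmul where
  "qmul n I A B = qcls n I (tmul (qrep A) (qrep B))"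

definition qscale where
  "qscale n I (c::complex) A = qcls n I (\<lambda>w. c * qrep A w)"

definition alg_iso where
  "alg_iso n I J \<Phi> \<longleftrightarrow> bij_betw \<Phi> (qcar n I) (qcar n J) \<and>
     \<Phi> (qcls n I tone) = qcls n J tone \<and>
     (\<forall>A\<in>qcar n I. \<forall>B\<in>qcar n I.
        \<Phi> (qadd n I A B) = qadd n J (\<Phi> A) (\<Phi> B) \<and>
        \<Phi> (qmul n I A B) = qmul n J (\<Phi> A) (\<Phi> B)) \<and>
     (\<forall>c. \<forall>A\<in>qcar n I. \<Phi> (qscale n I c A) = qscale n J c (\<Phi> A))"

definition alg_iso_op where
  "alg_iso_op n I J \<Phi> \<longleftrightarrow> bij_betw \<Phi> (qcar n I) (qcar n J) \<and>
     \<Phi> (qcls n I tone) = qcls n J tone \<and>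
     (\<forall>A\<in>qcar n I. \<forall>B\<in>qcar n I.
        \<Phi> (qadd n I A B) = qadd n J (\<Phi> A) (\<Phi> B) \<and>
        \<Phi> (qmul n I A B) = qmul n J (\<Phi> B) (\<Phi> A)) \<and>
     (\<forall>c. \<forall>A\<in>qcar n I. \<Phi> (qscale n I c A) = qscale n J c (\<Phi> A))"

definition extends_N where
  "extends_N n I J \<Phi> \<longleftrightarrow> (\<forall>\<alpha><n. \<Phi> (qcls n I (xgen \<alpha>)) = qcls n J (xgen ((n - \<alpha>) mod n)))"

text \<open>Word reversal: the anti-automorphism of TV fixing V, identifying TV^op with TV\<close>
definition trev :: "(nat list \<Rightarrow> complex) \<Rightarrow> nat list \<Rightarrow> complex" where
  "trev f = (\<lambda>w. f (rev w))"

end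

theory Submission
  imports Defs "HOL-Complex_Analysis.Complex_Analysis"
begin


lemma e_add: "e (a + b) = e a * e b"
  unfolding e_def by (simp add: distrib_left exp_add)

lemma e_diff: "e (a - b) = e a / e b"
  unfolding e_def by (simp add: right_diff_distrib exp_diff)

lemma e_minus: "e (- a) = inverse (e a)"
  unfolding e_def by (simp add: exp_minus)

lemma e_nonzero[simp]: "e a \<noteq> 0"
  unfolding e_def by simp

lemma e_zero[simp]: "e 0 = 1"
  unfolding e_def by simp

lemma e_int[simp]: "e (of_int m) = 1"
proof -
  have "e (of_int m) = exp (2 * of_real pi * \<i> * of_int m)" unfolding e_def by simp
  also have "\<dots> = exp ((2 * of_int m * pi) * \<i>)" by (simp add: mult_ac)
  also have "\<dots> = 1" by (rule exp_integer_2pi) auto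
  finally show ?thesis .
qed

lemma e_nat[simp]: "e (of_nat m) = 1"
  using e_int[of "int m"] by simp

lemma e_add_int: "e (a + of_int m) = e a"
  by (simp add: e_add)

lemma e_eqI: "a - b = of_int m \<Longrightarrow> e a = e b"
  by (metis add_diff_cancel_left' diff_add_cancel e_add_int)

lemma e_half: "e (1/2) = -1"
  unfolding e_def by simp

lemma norm_e: "norm (e w) = exp (- 2 * pi * Im w)"
  unfolding e_def by simp

lemma e_sum: "(\<Prod>i\<in>A. e (f i)) = e (\<Sum>i\<in>A. f i)"
  by (induction A rule: infinite_finite_induct) (auto simp: e_add)

lemma e_continuous[continuous_intros]: "continuous_on S f \<Longrightarrow> continuous_on S (\<lambda>x. e (f x))"
  unfolding e_def by (intro continuous_intros)

lemma e_holo[holomorphic_intros]: "f holomorphic_on S \<Longrightarrow> (\<lambda>x. e (f x)) holomorphic_on S"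
  unfolding e_def by (intro holomorphic_intros)


lemma e_powi: "e x powi m = e (of_int m * x)"
  unfolding e_def by (simp add: exp_power_int mult_ac)

lemma m1_powi: "(-1::complex) powi m = e (of_int m / 2)"
  using e_powi[of "1/2" m] by (simp add: e_half)

definition tt :: "complex \<Rightarrow> complex \<Rightarrow> int \<Rightarrow> complex" where
  "tt \<eta> z m = e (of_int m / 2 + of_int m * z + of_int m * (of_int m - 1) / 2 * \<eta>)"

lemma theta_tt: "theta \<eta> z = infsum (tt \<eta> z) UNIV"
  unfolding theta_def tt_def by (simp add: m1_powi e_add mult.assoc)

lemma theta_plus_int: "theta \<eta> (z + of_int j) = theta \<eta> z"
  unfolding theta_tt
proof (rule infsum_cong)
  fix m show "tt \<eta> (z + of_int j) m = tt \<eta> z m"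
    unfolding tt_def by (rule e_eqI[of _ _ "m * j"]) (simp add: algebra_simps)
qed

lemma theta_plus_nat: "theta \<eta> (z + of_nat j) = theta \<eta> z"
  using theta_plus_int[of \<eta> z "int j"] by simp


lemma e_half_shift: "e (1/2 - z) = - e (- z)"
  using e_add[of "1/2" "-z"] by (simp add: e_half)

lemma theta_minus: "theta \<eta> (- z) = - e (- z) * theta \<eta> z"
proof -
  have b: "bij_betw (\<lambda>m::int. 1 - m) UNIV UNIV"
    by (rule bij_betwI[where g="\<lambda>m. 1 - m"]) auto
  have "theta \<eta> (- z) = infsum (\<lambda>m. tt \<eta> (-z) (1 - m)) UNIV"
    unfolding theta_tt by (rule infsum_reindex_bij_betw[OF b, symmetric])
  also have "\<dots> = infsum (\<lambda>m. (- e (- z)) * tt \<eta> z m) UNIV"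
  proof (rule infsum_cong)
    fix m
    have "tt \<eta> (-z) (1 - m) = e (1/2 - z + (of_int m / 2 + of_int m * z + of_int m * (of_int m - 1) / 2 * \<eta>))"
      unfolding tt_def by (rule e_eqI[of _ _ "- m"]) (simp add: field_simps)
    then show "tt \<eta> (-z) (1 - m) = (- e (- z)) * tt \<eta> z m"
      by (simp only: e_add tt_def e_half_shift)
  qed
  also have "\<dots> = - e (- z) * theta \<eta> z"
    unfolding theta_tt by (rule infsum_cmult_right')
  finally show ?thesis .
qed

lemma theta_zero: "theta \<eta> 0 = 0"
  using theta_minus[of \<eta> 0] by simp

lemma theta_plus_eta: "theta \<eta> (z + \<eta>) = - e (- z) * theta \<eta> z"
proof -
  have b: "bij_betw (\<lambda>m::int. m - 1) UNIV UNIV"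
    by (rule bij_betwI[where g="\<lambda>m. m + 1"]) auto
  have "theta \<eta> (z + \<eta>) = infsum (\<lambda>m. tt \<eta> (z + \<eta>) (m - 1)) UNIV"
    unfolding theta_tt by (rule infsum_reindex_bij_betw[OF b, symmetric])
  also have "\<dots> = infsum (\<lambda>m. (- e (- z)) * tt \<eta> z m) UNIV"
  proof (rule infsum_cong)
    fix m
    have "tt \<eta> (z + \<eta>) (m - 1) = e (1/2 - z + (of_int m / 2 + of_int m * z + of_int m * (of_int m - 1) / 2 * \<eta>))"
      unfolding tt_def by (rule e_eqI[of _ _ "- 1"]) (simp add: field_simps)
    then show "tt \<eta> (z + \<eta>) (m - 1) = (- e (- z)) * tt \<eta> z m"
      by (simp only: e_add tt_def e_half_shift)
  qed
  also have "\<dots> = - e (- z) * theta \<eta> z"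
    unfolding theta_tt by (rule infsum_cmult_right')
  finally show ?thesis .
qed


lemma bij_mod:
  assumes n: "n > 0" and s: "s = 1 \<or> s = -1"
  shows "bij_betw (\<lambda>m. nat ((s * int m + a) mod int n)) {..<n} {..<n}"
proof -
  let ?f = "\<lambda>m. nat ((s * int m + a) mod int n)"
  have inj: "inj_on ?f {..<n}"
  proof (rule inj_onI)
    fix x y assume x: "x \<in> {..<n}" and y: "y \<in> {..<n}" and eq: "?f x = ?f y"
    have "(s * int x + a) mod int n = (s * int y + a) mod int n"
      using eq n by (simp add: nat_eq_iff2)
    hence "int n dvd (s * int x + a) - (s * int y + a)"
      by (simp add: mod_eq_dvd_iff)
    hence "int n dvd s * (int x - int y)" by (simp add: algebra_simps)
    hence d: "int n dvd (int x - int y)" using s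
      by (metis dvd_minus_iff mult_1 mult_minus_left)
    have "\<bar>int x - int y\<bar> < int n" using x y by auto
    with d have "int x - int y = 0"
      using dvd_imp_le_int[of "int x - int y" "int n"] by (cases "int x - int y = 0") auto
    thus "x = y" by simp
  qed
  have sub: "?f ` {..<n} \<subseteq> {..<n}"
    using n by (auto simp: nat_less_iff)
  have "?f ` {..<n} = {..<n}"
    by (rule card_subset_eq) (use inj sub in \<open>auto simp: card_image\<close>)
  thus ?thesis using inj by (simp add: bij_betw_def)
qed

lemma prod_periodic_reindex:
  fixes g :: "complex \<Rightarrow> complex"
  assumes n: "n > 0" and per: "\<And>x j. g (x + of_int j) = g x"
    and bij: "bij_betw \<pi> {..<n} {..<n}"
    and h: "\<And>m. m < n \<Longrightarrow> int n dvd h m - int (\<pi> m)"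
  shows "(\<Prod>m<n. g (w + of_int (h m) / of_nat n)) = (\<Prod>m<n. g (w + of_nat m / of_nat n))"
proof -
  have "(\<Prod>m<n. g (w + of_int (h m) / of_nat n)) = (\<Prod>m<n. g (w + of_nat (\<pi> m) / of_nat n))"
  proof (rule prod.cong[OF refl])
    fix m assume "m \<in> {..<n}"
    then obtain j where j: "h m - int (\<pi> m) = int n * j" using h by (auto elim!: dvdE)
    have "of_int (h m) / of_nat n = (of_nat (\<pi> m) / of_nat n + of_int j :: complex)"
    proof -
      have "h m = int (\<pi> m) + int n * j" using j by simp
      hence "(of_int (h m) :: complex) = of_nat (\<pi> m) + of_nat n * of_int j" by simp
      thus ?thesis using n by (simp add: field_simps)
    qed
    hence "g (w + of_int (h m) / of_nat n) = g ((w + of_nat (\<pi> m) / of_nat n) + of_int j)"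
      by (simp add: add.assoc)
    also have "\<dots> = g (w + of_nat (\<pi> m) / of_nat n)" by (rule per)
    finally show "g (w + of_int (h m) / of_nat n) = g (w + of_nat (\<pi> m) / of_nat n)" .
  qed
  also have "\<dots> = (\<Prod>m<n. g (w + of_nat m / of_nat n))"
    using prod.reindex_bij_betw[OF bij, of "\<lambda>m. g (w + of_nat m / of_nat n)"] by simp
  finally show ?thesis .
qed

lemma sum_nat_lessThan_complex: "2 * (\<Sum>m<n. (of_nat m :: complex)) = of_nat n * (of_nat n - 1)"
  by (induction n) (auto simp: algebra_simps)

lemma prod_e_affine:
  "(\<Prod>m<n. e (c + d * of_nat m)) = e (of_nat n * c + d * of_nat n * (of_nat n - 1) / 2)"
proof -
  have "(\<Prod>m<n. e (c + d * of_nat m)) = e (\<Sum>m<n. c + d * of_nat m)" by (rule e_sum)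
  also have "(\<Sum>m<n. c + d * of_nat m) = of_nat n * c + d * (\<Sum>m<n. of_nat m)"
    by (simp add: sum.distrib sum_distrib_left)
  also have "\<dots> = of_nat n * c + d * of_nat n * (of_nat n - 1) / 2"
  proof -
    have "d * (\<Sum>m<n. of_nat m) = d * (2 * (\<Sum>m<n. of_nat m)) / 2" by simp
    also have "\<dots> = d * (of_nat n * (of_nat n - 1)) / 2" by (simp only: sum_nat_lessThan_complex)
    finally show ?thesis by (simp add: mult.assoc)
  qed
  finally show ?thesis .
qed

definition Ex :: "nat \<Rightarrow> complex \<Rightarrow> int \<Rightarrow> complex \<Rightarrow> complex" where
  "Ex n \<eta> \<alpha> z = of_int \<alpha> * z + of_int \<alpha> / (2 * of_nat n)
        + of_int (\<alpha> * (\<alpha> - int n)) / (2 * of_nat n) * \<eta>"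

lemma theta_a_split: "theta_a n \<eta> \<alpha> z = e (Ex n \<eta> \<alpha> z) *
   (\<Prod>m<n. theta \<eta> (z + of_nat m / of_nat n + of_int \<alpha> / of_nat n * \<eta>))"
  unfolding theta_a_def Ex_def ..

lemma theta_per: "theta \<eta> (x + of_int j) = theta \<eta> x" by (rule theta_plus_int)


lemma neg_e_eq: "- e x = e (1/2 + x)"
  by (simp add: e_add e_half)

lemma theta_a_plus_n:
  assumes n: "n > 0"
  shows "theta_a n \<eta> (\<alpha> + int n) z = theta_a n \<eta> \<alpha> z"
proof -
  define w where "w m = z + of_nat m / of_nat n + of_int \<alpha> / of_nat n * \<eta>" for m
  have 1: "theta \<eta> (z + of_nat m / of_nat n + of_int (\<alpha> + int n) / of_nat n * \<eta>)
      = e (1/2 - z - of_int \<alpha> / of_nat n * \<eta> + (- 1 / of_nat n) * of_nat m) * theta \<eta> (w m)" for m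
  proof -
    have "z + of_nat m / of_nat n + of_int (\<alpha> + int n) / of_nat n * \<eta> = w m + \<eta>"
      unfolding w_def using n by (simp add: field_simps)
    hence "theta \<eta> (z + of_nat m / of_nat n + of_int (\<alpha> + int n) / of_nat n * \<eta>) = - e (- w m) * theta \<eta> (w m)"
      by (simp add: theta_plus_eta)
    also have "- e (- w m) = e (1/2 - z - of_int \<alpha> / of_nat n * \<eta> + (- 1 / of_nat n) * of_nat m)"
      unfolding neg_e_eq w_def by (rule arg_cong[where f=e]) (simp add: field_simps)
    finally show ?thesis .
  qed
  have "theta_a n \<eta> (\<alpha> + int n) z = e (Ex n \<eta> (\<alpha> + int n) z) *
     ((\<Prod>m<n. e (1/2 - z - of_int \<alpha> / of_nat n * \<eta> + (- 1 / of_nat n) * of_nat m)) * (\<Prod>m<n. theta \<eta> (w m)))"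
    unfolding theta_a_split 1 prod.distrib ..
  also have "(\<Prod>m<n. e (1/2 - z - of_int \<alpha> / of_nat n * \<eta> + (- 1 / of_nat n) * of_nat m))
     = e (of_nat n * (1/2 - z - of_int \<alpha> / of_nat n * \<eta>) + (- 1 / of_nat n) * of_nat n * (of_nat n - 1) / 2)"
    by (rule prod_e_affine)
  also have "e (Ex n \<eta> (\<alpha> + int n) z) * (e (of_nat n * (1/2 - z - of_int \<alpha> / of_nat n * \<eta>) + (- 1 / of_nat n) * of_nat n * (of_nat n - 1) / 2) * (\<Prod>m<n. theta \<eta> (w m)))
     = e (Ex n \<eta> (\<alpha> + int n) z + (of_nat n * (1/2 - z - of_int \<alpha> / of_nat n * \<eta>) + (- 1 / of_nat n) * of_nat n * (of_nat n - 1) / 2)) * (\<Prod>m<n. theta \<eta> (w m))"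
    by (simp add: e_add)
  also have "e (Ex n \<eta> (\<alpha> + int n) z + (of_nat n * (1/2 - z - of_int \<alpha> / of_nat n * \<eta>) + (- 1 / of_nat n) * of_nat n * (of_nat n - 1) / 2))
      = e (Ex n \<eta> \<alpha> z)"
    by (rule e_eqI[of _ _ 1]) (use n in \<open>simp add: Ex_def field_simps\<close>)
  finally show ?thesis unfolding theta_a_split w_def .
qed

lemma theta_a_plus_mult:
  assumes n: "n > 0"
  shows "theta_a n \<eta> (\<alpha> + int n * j) z = theta_a n \<eta> \<alpha> z"
proof (induction j rule: int_induct[where k=0])
  case base then show ?case by simp
next
  case (step1 i)
  have "theta_a n \<eta> (\<alpha> + int n * (i + 1)) z = theta_a n \<eta> ((\<alpha> + int n * i) + int n) z"
    by (simp add: algebra_simps)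
  also have "\<dots> = theta_a n \<eta> (\<alpha> + int n * i) z" by (rule theta_a_plus_n[OF n])
  finally show ?case using step1 by simp
next
  case (step2 i)
  have "theta_a n \<eta> (\<alpha> + int n * i) z = theta_a n \<eta> ((\<alpha> + int n * (i - 1)) + int n) z"
    by (simp add: algebra_simps)
  also have "\<dots> = theta_a n \<eta> (\<alpha> + int n * (i - 1)) z" by (rule theta_a_plus_n[OF n])
  finally show ?case using step2 by simp
qed

lemma theta_a_cong:
  assumes n: "n > 0" and d: "int n dvd \<alpha> - \<beta>"
  shows "theta_a n \<eta> \<alpha> = theta_a n \<eta> \<beta>"
proof
  fix z
  obtain j where "\<alpha> - \<beta> = int n * j" using d by (auto elim!: dvdE)
  hence "\<alpha> = \<beta> + int n * j" by simp
  thus "theta_a n \<eta> \<alpha> z = theta_a n \<eta> \<beta> z" using theta_a_plus_mult[OF n] by simp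
qed

lemma theta_a_mod:
  assumes n: "n > 0"
  shows "theta_a n \<eta> \<alpha> = theta_a n \<eta> (\<alpha> mod int n)"
  by (rule theta_a_cong[OF n]) (simp add: mod_eq_dvd_iff[symmetric])

lemma theta_a_refl:
  assumes n: "n > 0"
  shows "theta_a n \<eta> \<alpha> (- z) = - e (of_int \<alpha> / of_nat n - of_nat n * z) * theta_a n \<eta> (- \<alpha>) z"
proof -
  define u where "u = z + of_int (- \<alpha>) / of_nat n * \<eta>"
  have 1: "theta \<eta> (- z + of_nat m / of_nat n + of_int \<alpha> / of_nat n * \<eta>)
      = e ((1/2 - z + of_int \<alpha> / of_nat n * \<eta>) + (1 / of_nat n) * of_nat m) * theta \<eta> (u + of_int (- int m) / of_nat n)" for m
  proof -
    have a: "- z + of_nat m / of_nat n + of_int \<alpha> / of_nat n * \<eta> = - (u + of_int (- int m) / of_nat n)"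
      unfolding u_def by (simp add: field_simps)
    show ?thesis unfolding a theta_minus neg_e_eq
      by (rule arg_cong2[where f="(*)"], rule arg_cong[where f=e]) (auto simp: u_def field_simps)
  qed
  have 2: "(\<Prod>m<n. theta \<eta> (u + of_int (- int m) / of_nat n)) = (\<Prod>m<n. theta \<eta> (u + of_nat m / of_nat n))"
  proof (rule prod_periodic_reindex[OF n theta_per])
    show "bij_betw (\<lambda>m. nat (((-1) * int m + 0) mod int n)) {..<n} {..<n}" by (rule bij_mod[OF n]) simp
    fix m assume "m < n"
    show "int n dvd - int m - int (nat (((-1) * int m + 0) mod int n))"
      using n by (simp add: mod_eq_dvd_iff[symmetric])
  qed
  have 3: "(\<Prod>m<n. theta \<eta> (u + of_nat m / of_nat n)) = (\<Prod>m<n. theta \<eta> (z + of_nat m / of_nat n + of_int (- \<alpha>) / of_nat n * \<eta>))"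
    unfolding u_def by (simp add: algebra_simps)
  have "theta_a n \<eta> \<alpha> (- z) = e (Ex n \<eta> \<alpha> (- z)) *
     ((\<Prod>m<n. e ((1/2 - z + of_int \<alpha> / of_nat n * \<eta>) + (1 / of_nat n) * of_nat m)) * (\<Prod>m<n. theta \<eta> (u + of_int (- int m) / of_nat n)))"
    unfolding theta_a_split 1 prod.distrib ..
  also have "\<dots> = e (Ex n \<eta> \<alpha> (- z)) * (e (of_nat n * (1/2 - z + of_int \<alpha> / of_nat n * \<eta>) + (1 / of_nat n) * of_nat n * (of_nat n - 1) / 2)
       * (\<Prod>m<n. theta \<eta> (z + of_nat m / of_nat n + of_int (- \<alpha>) / of_nat n * \<eta>)))"
    unfolding prod_e_affine 2 3 ..
  also have "\<dots> = e (Ex n \<eta> \<alpha> (- z) + (of_nat n * (1/2 - z + of_int \<alpha> / of_nat n * \<eta>) + (1 / of_nat n) * of_nat n * (of_nat n - 1) / 2))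
       * (\<Prod>m<n. theta \<eta> (z + of_nat m / of_nat n + of_int (- \<alpha>) / of_nat n * \<eta>))"
    by (simp add: e_add)
  also have "e (Ex n \<eta> \<alpha> (- z) + (of_nat n * (1/2 - z + of_int \<alpha> / of_nat n * \<eta>) + (1 / of_nat n) * of_nat n * (of_nat n - 1) / 2))
      = e (1/2 + (of_int \<alpha> / of_nat n - of_nat n * z) + Ex n \<eta> (- \<alpha>) z)"
    by (rule e_eqI[of _ _ "int n - 1"]) (use n in \<open>simp add: Ex_def field_simps\<close>)
  finally show ?thesis unfolding theta_a_split e_add neg_e_eq by (simp add: mult.assoc)
qed

lemma theta_a_shift:
  assumes n: "n > 0"
  shows "theta_a n \<eta> \<beta> (s + (of_int a0 + of_int b0 * \<eta>) / of_nat n)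
     = e (Ex n \<eta> \<beta> (s + (of_int a0 + of_int b0 * \<eta>) / of_nat n) - Ex n \<eta> (\<beta> + b0) s) * theta_a n \<eta> (\<beta> + b0) s"
proof -
  define u where "u = s + of_int (\<beta> + b0) / of_nat n * \<eta>"
  have 1: "(\<Prod>m<n. theta \<eta> (s + (of_int a0 + of_int b0 * \<eta>) / of_nat n + of_nat m / of_nat n + of_int \<beta> / of_nat n * \<eta>))
      = (\<Prod>m<n. theta \<eta> (u + of_int (int m + a0) / of_nat n))"
    unfolding u_def by (rule prod.cong[OF refl], rule arg_cong[where f="theta \<eta>"]) (simp add: field_simps)
  have 2: "(\<Prod>m<n. theta \<eta> (u + of_int (int m + a0) / of_nat n)) = (\<Prod>m<n. theta \<eta> (u + of_nat m / of_nat n))"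
  proof (rule prod_periodic_reindex[OF n theta_per])
    show "bij_betw (\<lambda>m. nat ((1 * int m + a0) mod int n)) {..<n} {..<n}" by (rule bij_mod[OF n]) simp
    fix m assume "m < n"
    show "int n dvd (int m + a0) - int (nat ((1 * int m + a0) mod int n))"
      using n by (simp add: mod_eq_dvd_iff[symmetric])
  qed
  have 3: "(\<Prod>m<n. theta \<eta> (u + of_nat m / of_nat n)) = (\<Prod>m<n. theta \<eta> (s + of_nat m / of_nat n + of_int (\<beta> + b0) / of_nat n * \<eta>))"
    unfolding u_def by (simp add: algebra_simps)
  show ?thesis
    unfolding theta_a_split 1 2 3 e_diff using e_nonzero by (simp add: field_simps)
qed

lemma theta_a_0_0:
  assumes n: "n > 0"
  shows "theta_a n \<eta> 0 0 = 0"
proof -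
  have "(\<Prod>m<n. theta \<eta> (0 + of_nat m / of_nat n + of_int 0 / of_nat n * \<eta>)) = 0"
    by (rule prod_zero) (use n in \<open>auto intro!: bexI[of _ 0] simp: theta_zero\<close>)
  thus ?thesis unfolding theta_a_split by simp
qed


lemma Rpref_neg:
  assumes n: "n > 0"
  shows "Rpref n \<eta> (- z) = - e (of_nat n ^ 2 * z) * Rpref n \<eta> z"
proof -
  have 1: "theta_a n \<eta> (int a) (- (- z)) = e (1/2 + of_nat n * z + (1 / of_nat n) * of_nat a) * theta_a n \<eta> (- int a) (- z)" for a
  proof -
    have "theta_a n \<eta> (int a) (- (- z)) = - e (of_int (int a) / of_nat n - of_nat n * (- z)) * theta_a n \<eta> (- int a) (- z)"
      by (rule theta_a_refl[OF n])
    also have "- e (of_int (int a) / of_nat n - of_nat n * (- z)) = e (1/2 + of_nat n * z + (1 / of_nat n) * of_nat a)"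
      unfolding neg_e_eq by (simp add: field_simps)
    finally show ?thesis .
  qed
  have 2: "(\<Prod>a<n. theta_a n \<eta> (- int a) (- z)) = (\<Prod>a<n. theta_a n \<eta> (int a) (- z))"
  proof -
    have "(\<Prod>a<n. theta_a n \<eta> (- int a) (- z)) = (\<Prod>a<n. theta_a n \<eta> (int (nat (((-1) * int a + 0) mod int n))) (- z))"
    proof (rule prod.cong[OF refl])
      fix a assume "a \<in> {..<n}"
      have "theta_a n \<eta> (- int a) = theta_a n \<eta> (int (nat (((-1) * int a + 0) mod int n)))"
        by (rule theta_a_cong[OF n]) (use n in \<open>simp add: mod_eq_dvd_iff[symmetric]\<close>)
      thus "theta_a n \<eta> (- int a) (- z) = theta_a n \<eta> (int (nat (((-1) * int a + 0) mod int n))) (- z)" by simp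
    qed
    also have "\<dots> = (\<Prod>a<n. theta_a n \<eta> (int a) (- z))"
      using prod.reindex_bij_betw[OF bij_mod[OF n, of "-1" 0], of "\<lambda>a. theta_a n \<eta> (int a) (- z)"] by simp
    finally show ?thesis .
  qed
  have "(\<Prod>a<n. theta_a n \<eta> (int a) (- (- z))) = e (of_nat n * (1/2 + of_nat n * z) + (1 / of_nat n) * of_nat n * (of_nat n - 1) / 2) * (\<Prod>a<n. theta_a n \<eta> (int a) (- z))"
    unfolding 1 prod.distrib prod_e_affine 2 ..
  also have "e (of_nat n * (1/2 + of_nat n * z) + (1 / of_nat n) * of_nat n * (of_nat n - 1) / 2) = - e (of_nat n ^ 2 * z)"
    unfolding neg_e_eq by (rule e_eqI[of _ _ "int n - 1"]) (use n in \<open>simp add: field_simps power2_eq_square\<close>)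
  finally show ?thesis unfolding Rpref_def by simp
qed

definition Ent :: "nat \<Rightarrow> complex \<Rightarrow> int \<Rightarrow> int \<Rightarrow> int \<Rightarrow> complex \<Rightarrow> complex \<Rightarrow> complex" where
  "Ent n \<eta> A B C t z = Rpref n \<eta> z * theta_a n \<eta> A (- z + t) / (theta_a n \<eta> B (- z) * theta_a n \<eta> C t)"

lemma regroup: "(u * R) * (v * X) / ((p * Y) * (q * W)) = ((u * v) / (p * q)) * (R * X / (Y * W))"
  for u R v X p Y q W :: complex
  by (simp add: times_divide_times_eq ac_simps)

lemma Ent_neg:
  assumes n: "n > 0" and ABC: "A = B + C"
    and dA: "int n dvd A' + A" and dB: "int n dvd B' + B" and dC: "int n dvd C' + C"
  shows "Ent n \<eta> A' B' C' (- t) (- z) = e (of_nat n ^ 2 * z) * Ent n \<eta> A B C t z"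
proof -
  have cA: "theta_a n \<eta> A' = theta_a n \<eta> (- A)" by (rule theta_a_cong[OF n]) (use dA in simp)
  have cB: "theta_a n \<eta> B' = theta_a n \<eta> (- B)" by (rule theta_a_cong[OF n]) (use dB in simp)
  have cC: "theta_a n \<eta> C' = theta_a n \<eta> (- C)" by (rule theta_a_cong[OF n]) (use dC in simp)
  have tA: "theta_a n \<eta> (- A) (- (- z) + - t) = - e (- of_int A / of_nat n - of_nat n * (- z + t)) * theta_a n \<eta> A (- z + t)"
    using theta_a_refl[OF n, of \<eta> "- A" "- z + t"] by simp
  have tB: "theta_a n \<eta> (- B) (- (- z)) = - e (- of_int B / of_nat n - of_nat n * (- z)) * theta_a n \<eta> B (- z)"
    using theta_a_refl[OF n, of \<eta> "- B" "- z"] by simp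
  have tC: "theta_a n \<eta> (- C) (- t) = - e (- of_int C / of_nat n - of_nat n * t) * theta_a n \<eta> C t"
    using theta_a_refl[OF n, of \<eta> "- C" "t"] by simp
  have eX: "e (- of_int A / of_nat n - of_nat n * (- z + t)) = e (- of_int B / of_nat n - of_nat n * (- z)) * e (- of_int C / of_nat n - of_nat n * t)"
    unfolding e_add[symmetric] by (rule arg_cong[where f=e]) (use n in \<open>simp add: ABC field_simps\<close>)
  have fac: "((- e (of_nat n ^ 2 * z)) * (- e (- of_int A / of_nat n - of_nat n * (- z + t))))
      / ((- e (- of_int B / of_nat n - of_nat n * (- z))) * (- e (- of_int C / of_nat n - of_nat n * t))) = e (of_nat n ^ 2 * z)"
    unfolding eX by (simp add: field_simps)
  show ?thesis
    unfolding Ent_def cA cB cC tA tB tC Rpref_neg[OF n] regroup fac ..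
qed


lemma ratio_summable:
  fixes a :: "nat \<Rightarrow> complex"
  assumes s: "s > 0" and r: "\<And>n. n \<ge> 1 \<Longrightarrow> norm (a (Suc n)) \<le> exp (- 2 * pi * s * of_nat n) * norm (a n)"
  shows "summable (\<lambda>n. norm (a n * x ^ n))"
proof -
  define K where "K = norm x + 1"
  have K: "K > 0" unfolding K_def using norm_ge_zero[of x] by linarith
  obtain N :: nat where N: "of_nat N > ln (2 * K) / (2 * pi * s)" using reals_Archimedean2 by blast
  have N1: "N \<ge> 0" by simp
  show ?thesis
  proof (rule summable_ratio_test[where c="1/2" and N="Suc N"])
    fix n assume n: "Suc N \<le> n"
    have "exp (- 2 * pi * s * of_nat n) \<le> exp (- 2 * pi * s * of_nat N)"
      using n s by (simp add: mult_le_cancel_left_pos)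
    also have "\<dots> < exp (- ln (2 * K))"
    proof -
      have "ln (2 * K) < 2 * pi * s * of_nat N" using N s by (simp add: field_simps)
      thus ?thesis by simp
    qed
    also have "\<dots> = 1 / (2 * K)" using K by (simp add: exp_minus inverse_eq_divide)
    finally have ex: "exp (- 2 * pi * s * of_nat n) * K \<le> 1/2" using K by (simp add: field_simps)
    have "norm (norm (a (Suc n) * x ^ Suc n)) = norm (a (Suc n)) * norm x * norm x ^ n"
      by (simp add: norm_mult norm_power)
    also have "\<dots> \<le> exp (- 2 * pi * s * of_nat n) * norm (a n) * norm x * norm x ^ n"
      using r[of n] n by (intro mult_right_mono) auto
    also have "\<dots> \<le> exp (- 2 * pi * s * of_nat n) * norm (a n) * K * norm x ^ n"
      unfolding K_def by (intro mult_right_mono mult_left_mono) auto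
    also have "\<dots> = (exp (- 2 * pi * s * of_nat n) * K) * (norm (a n) * norm x ^ n)" by (simp add: ac_simps)
    also have "\<dots> \<le> 1/2 * (norm (a n) * norm x ^ n)"
      using ex by (intro mult_right_mono) auto
    also have "\<dots> = 1/2 * norm (norm (a n * x ^ n))" by (simp add: norm_mult norm_power)
    finally show "norm (norm (a (Suc n) * x ^ Suc n)) \<le> 1/2 * norm (norm (a n * x ^ n))" .
  qed simp
qed

lemma powser_holo:
  fixes a :: "nat \<Rightarrow> complex"
  assumes "\<And>x. summable (\<lambda>n. norm (a n * x ^ n))"
  shows "(\<lambda>x. \<Sum>n. a n * x ^ n) holomorphic_on UNIV"
proof -
  have sm: "\<And>y. summable (\<lambda>n. a n * y ^ n)" by (rule summable_norm_cancel[OF assms])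
  have "(\<lambda>x. \<Sum>n. a n * x ^ n) field_differentiable (at x)" for x
    unfolding field_differentiable_def by (rule exI, rule termdiffs_strong_converges_everywhere[OF sm])
  thus ?thesis unfolding holomorphic_on_def by (simp add: field_differentiable_at_within)
qed

definition cc :: "complex \<Rightarrow> nat \<Rightarrow> complex" where
  "cc \<eta> n = e (of_nat n / 2 + of_nat n * (of_nat n - 1) / 2 * \<eta>)"

definition dd :: "complex \<Rightarrow> nat \<Rightarrow> complex" where
  "dd \<eta> n = (if n = 0 then 0 else e (- of_nat n / 2 + of_nat n * (of_nat n + 1) / 2 * \<eta>))"

lemma e_of_nat_mult: "e (of_nat n * z) = e z ^ n"
proof -
  have "2 * of_real pi * \<i> * (of_nat n * z) = of_nat n * (2 * of_real pi * \<i> * z)" by (simp add: mult_ac)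
  thus ?thesis unfolding e_def by (simp only: exp_of_nat_mult)
qed

lemma aux1: "((1+x)/2 + (1+x)*((1+x)-1)/2*\<eta>) = (x/2 + x*(x-1)/2*\<eta> + (1/2 + x*\<eta>))" for x \<eta> :: complex
  by (simp add: field_simps)
lemma aux2: "(- (1+x)/2 + (1+x)*((1+x)+1)/2*\<eta>) = (- x/2 + x*(x+1)/2*\<eta> + (- 1/2 + (1+x)*\<eta>))" for x \<eta> :: complex
  by (simp add: field_simps)

lemma cc_Suc_aux: "(of_nat (Suc n) / 2 + of_nat (Suc n) * (of_nat (Suc n) - 1) / 2 * \<eta>) = (of_nat n / 2 + of_nat n * (of_nat n - 1) / 2 * \<eta> + (1/2 + of_nat n * \<eta>) :: complex)"
  unfolding of_nat_Suc by (rule aux1)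

lemma cc_Suc: "cc \<eta> (Suc n) = cc \<eta> n * e (1/2 + of_nat n * \<eta>)"
  unfolding cc_def cc_Suc_aux e_add[of _ "1/2 + of_nat n * \<eta>"] ..

lemma cc_summable:
  assumes s: "Im \<eta> > 0"
  shows "summable (\<lambda>n. norm (cc \<eta> n * x ^ n))"
proof (rule ratio_summable[OF s])
  fix n :: nat assume "n \<ge> 1"
  have "cc \<eta> (Suc n) = cc \<eta> n * e (1/2 + of_nat n * \<eta>)" by (rule cc_Suc)
  moreover have "norm (e (1/2 + of_nat n * \<eta>)) = exp (- 2 * pi * Im \<eta> * of_nat n)"
    by (simp add: norm_e)
  ultimately show "norm (cc \<eta> (Suc n)) \<le> exp (- 2 * pi * Im \<eta> * of_nat n) * norm (cc \<eta> n)"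
    by (simp add: norm_mult)
qed

lemma dd_summable:
  assumes s: "Im \<eta> > 0"
  shows "summable (\<lambda>n. norm (dd \<eta> n * x ^ n))"
proof (rule ratio_summable[OF s])
  fix n :: nat assume n: "n \<ge> 1"
  have a1: "dd \<eta> (Suc n) = dd \<eta> n * e (- 1/2 + of_nat (Suc n) * \<eta>)"
  proof -
    have "(- of_nat (Suc n) / 2 + of_nat (Suc n) * (of_nat (Suc n) + 1) / 2 * \<eta>) = (- of_nat n / 2 + of_nat n * (of_nat n + 1) / 2 * \<eta> + (- 1/2 + of_nat (Suc n) * \<eta>) :: complex)"
      unfolding of_nat_Suc by (rule aux2)
    thus ?thesis using n unfolding dd_def by (simp add: e_add)
  qed
  have a2: "norm (e (- 1/2 + of_nat (Suc n) * \<eta>)) \<le> exp (- 2 * pi * Im \<eta> * of_nat n)"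
    using s by (simp add: norm_e)
  have "norm (dd \<eta> (Suc n)) = norm (dd \<eta> n) * norm (e (- 1/2 + of_nat (Suc n) * \<eta>))"
    unfolding a1 norm_mult ..
  also have "\<dots> \<le> norm (dd \<eta> n) * exp (- 2 * pi * Im \<eta> * of_nat n)"
    by (rule mult_left_mono[OF a2 norm_ge_zero])
  finally show "norm (dd \<eta> (Suc n)) \<le> exp (- 2 * pi * Im \<eta> * of_nat n) * norm (dd \<eta> n)"
    by (simp add: mult.commute)
qed


lemma theta_series:
  assumes s: "Im \<eta> > 0"
  shows "theta \<eta> z = (\<Sum>n. cc \<eta> n * e z ^ n) + (\<Sum>n. dd \<eta> n * e (- z) ^ n)"
proof -
  have h1: "((\<lambda>n. cc \<eta> n * e z ^ n) has_sum (\<Sum>n. cc \<eta> n * e z ^ n)) UNIV"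
    by (rule norm_summable_imp_has_sum[OF cc_summable[OF s]])
       (rule summable_sums, rule summable_norm_cancel[OF cc_summable[OF s]])
  have "(tt \<eta> z \<circ> int) = (\<lambda>n. cc \<eta> n * e z ^ n)"
    by (rule ext) (simp add: tt_def cc_def e_of_nat_mult[symmetric] e_add[symmetric] algebra_simps)
  with h1 have A: "(tt \<eta> z has_sum (\<Sum>n. cc \<eta> n * e z ^ n)) (range int)"
    by (simp add: has_sum_reindex)
  have h2: "((\<lambda>n. dd \<eta> n * e (- z) ^ n) has_sum (\<Sum>n. dd \<eta> n * e (- z) ^ n)) UNIV"
    by (rule norm_summable_imp_has_sum[OF dd_summable[OF s]])
       (rule summable_sums, rule summable_norm_cancel[OF dd_summable[OF s]])
  hence h2': "((\<lambda>n. dd \<eta> n * e (- z) ^ n) has_sum (\<Sum>n. dd \<eta> n * e (- z) ^ n)) {1..}"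
    by (subst has_sum_cong_neutral[where T=UNIV]) (auto simp: dd_def)
  have "(tt \<eta> z \<circ> (\<lambda>n. - int n)) x = dd \<eta> x * e (- z) ^ x" if "x \<in> {1..}" for x
  proof -
    have "dd \<eta> x * e (- z) ^ x = e (- of_nat x / 2 + of_nat x * (of_nat x + 1) / 2 * \<eta> + of_nat x * (- z))"
      using that by (simp add: dd_def e_of_nat_mult[symmetric] e_add[symmetric])
    also have "\<dots> = tt \<eta> z (- int x)"
      unfolding tt_def by (rule arg_cong[where f=e]) (simp add: field_simps)
    finally show ?thesis by simp
  qed
  with h2' have "((tt \<eta> z \<circ> (\<lambda>n. - int n)) has_sum (\<Sum>n. dd \<eta> n * e (- z) ^ n)) {1..}"
    by (subst has_sum_cong[where g="\<lambda>n. dd \<eta> n * e (- z) ^ n"]) auto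
  hence B: "(tt \<eta> z has_sum (\<Sum>n. dd \<eta> n * e (- z) ^ n)) ((\<lambda>n. - int n) ` {1..})"
    by (subst has_sum_reindex) (auto simp: inj_on_def)
  have U: "range int \<union> (\<lambda>n. - int n) ` {1..} = UNIV"
  proof -
    have "x \<in> range int \<union> (\<lambda>n. - int n) ` {1..}" for x :: int
    proof (cases "x \<ge> 0")
      case True thus ?thesis by (auto intro!: image_eqI[of _ _ "nat x"])
    next
      case False thus ?thesis by (auto intro!: image_eqI[of _ _ "nat (- x)"])
    qed
    thus ?thesis by auto
  qed
  have "(tt \<eta> z has_sum ((\<Sum>n. cc \<eta> n * e z ^ n) + (\<Sum>n. dd \<eta> n * e (- z) ^ n))) UNIV"
    using has_sum_Un_disjoint[OF A B] U by force
  thus ?thesis unfolding theta_tt by (rule infsumI)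
qed


lemma theta_holo:
  assumes s: "Im \<eta> > 0"
  shows "theta \<eta> holomorphic_on UNIV"
proof -
  have 1: "(\<lambda>x. \<Sum>n. cc \<eta> n * x ^ n) holomorphic_on UNIV" by (rule powser_holo[OF cc_summable[OF s]])
  have 2: "(\<lambda>x. \<Sum>n. dd \<eta> n * x ^ n) holomorphic_on UNIV" by (rule powser_holo[OF dd_summable[OF s]])
  have "(\<lambda>z. (\<Sum>n. cc \<eta> n * e z ^ n) + (\<Sum>n. dd \<eta> n * e (- z) ^ n)) holomorphic_on UNIV"
  proof (intro holomorphic_intros)
    show "(\<lambda>z. \<Sum>n. cc \<eta> n * e z ^ n) holomorphic_on UNIV"
    proof -
      have "(\<lambda>x. e x) holomorphic_on UNIV" unfolding e_def by (intro holomorphic_intros)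
      from holomorphic_on_compose_gen[OF this 1] show ?thesis by (simp add: o_def)
    qed
    show "(\<lambda>z. \<Sum>n. dd \<eta> n * e (- z) ^ n) holomorphic_on UNIV"
    proof -
      have "(\<lambda>x. e (- x)) holomorphic_on UNIV" unfolding e_def by (intro holomorphic_intros)
      from holomorphic_on_compose_gen[OF this 2] show ?thesis by (simp add: o_def)
    qed
  qed
  moreover have "theta \<eta> = (\<lambda>z. (\<Sum>n. cc \<eta> n * e z ^ n) + (\<Sum>n. dd \<eta> n * e (- z) ^ n))"
    using theta_series[OF s] by blast
  ultimately show ?thesis by simp
qed

lemma theta_cont[continuous_intros]:
  assumes s: "Im \<eta> > 0" and f: "continuous_on S f"
  shows "continuous_on S (\<lambda>x. theta \<eta> (f x))"
  using continuous_on_compose2[OF holomorphic_on_imp_continuous_on[OF theta_holo[OF s]] f]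
  by simp

lemma theta_ev_nz:
  assumes s: "Im \<eta> > 0" and nz: "theta \<eta> \<beta> \<noteq> 0"
  shows "\<forall>\<^sub>F x in at 0. theta \<eta> (x + c) \<noteq> 0"
proof -
  have h: "(\<lambda>x. theta \<eta> (x + c)) holomorphic_on UNIV"
  proof -
    have "(\<lambda>x. x + c) holomorphic_on UNIV" by (intro holomorphic_intros)
    from holomorphic_on_compose_gen[OF this theta_holo[OF s]] show ?thesis by (simp add: o_def)
  qed
  have "\<forall>\<^sub>F w in at 0. theta \<eta> (w + c) \<noteq> 0 \<and> w \<in> UNIV"
    by (rule non_zero_neighbour_alt[OF h, of 0 "\<beta> - c"]) (use nz in auto)
  thus ?thesis by simp
qed


definition ng :: "nat \<Rightarrow> nat \<Rightarrow> nat" where "ng n x = (n - x) mod n"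

lemma ng_lt: "n > 0 \<Longrightarrow> ng n x < n" unfolding ng_def by simp

lemma ng_ng: "x < n \<Longrightarrow> ng n (ng n x) = x"
  unfolding ng_def by (cases "x = 0") (auto simp: mod_if)

lemma ng_dvd: "x < n \<Longrightarrow> int n dvd int (ng n x) + int x"
  unfolding ng_def by (cases "x = 0") (auto simp: mod_if of_nat_diff)

lemma nat_mod_eq_dvd: "(p mod n = q mod n) \<longleftrightarrow> int n dvd int p - int q"
  by (metis mod_eq_dvd_iff of_nat_eq_iff zmod_int)

lemma Rent_Ent: "Rent n k \<eta> t z a b i j = (if (a + b) mod n = (i + j) mod n then
    Ent n \<eta> (int j - int i + (int b - int i) * (int k - 1)) (int j - int i - (int b - int i)) (int k * (int b - int i)) t z else 0)"
  unfolding Rent_def Ent_def Let_def ..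

lemma Rent_negN:
  assumes n: "n > 0" and lt: "a < n" "b < n" "i < n" "j < n"
  shows "Rent n k \<eta> (- t) (- z) (ng n a) (ng n b) (ng n i) (ng n j) = e (of_nat n ^ 2 * z) * Rent n k \<eta> t z a b i j"
proof -
  have da: "int n dvd int (ng n a) + int a" and db: "int n dvd int (ng n b) + int b"
   and di: "int n dvd int (ng n i) + int i" and dj: "int n dvd int (ng n j) + int j"
    using lt by (auto intro: ng_dvd)
  have cond: "((ng n a + ng n b) mod n = (ng n i + ng n j) mod n) \<longleftrightarrow> ((a + b) mod n = (i + j) mod n)"
  proof -
    define W where "W = (int (ng n a) + int a) + (int (ng n b) + int b) - (int (ng n i) + int i) - (int (ng n j) + int j)"
    define Y where "Y = int (a + b) - int (i + j)"
    have eq: "int (ng n a + ng n b) - int (ng n i + ng n j) = W + (- Y)"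
      unfolding W_def Y_def by simp
    have dW: "int n dvd W"
      unfolding W_def using dvd_diff[OF dvd_diff[OF dvd_add[OF da db] di] dj] .
    have "((ng n a + ng n b) mod n = (ng n i + ng n j) mod n) \<longleftrightarrow> int n dvd W + (- Y)"
      unfolding nat_mod_eq_dvd eq ..
    also have "\<dots> \<longleftrightarrow> int n dvd - Y" by (rule dvd_add_right_iff[OF dW])
    also have "\<dots> \<longleftrightarrow> ((a + b) mod n = (i + j) mod n)" unfolding nat_mod_eq_dvd Y_def by (simp add: dvd_diff_commute)
    finally show ?thesis .
  qed
  define r where "r = int b - int i"
  define r' where "r' = int (ng n b) - int (ng n i)"
  have dA: "int n dvd (int (ng n j) - int (ng n i) + r' * (int k - 1)) + (int j - int i + r * (int k - 1))"
  proof -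
    have eq: "(int (ng n j) - int (ng n i) + r' * (int k - 1)) + (int j - int i + r * (int k - 1))
      = (int (ng n j) + int j) - (int (ng n i) + int i) + ((int (ng n b) + int b) - (int (ng n i) + int i)) * (int k - 1)"
      unfolding r_def r'_def by (simp add: algebra_simps)
    have "int n dvd (int (ng n j) + int j) - (int (ng n i) + int i) + ((int (ng n b) + int b) - (int (ng n i) + int i)) * (int k - 1)"
      using dvd_add[OF dvd_diff[OF dj di] dvd_mult2[OF dvd_diff[OF db di]]] .
    thus ?thesis unfolding eq .
  qed
  have dB: "int n dvd (int (ng n j) - int (ng n i) - r') + (int j - int i - r)"
  proof -
    have eq: "(int (ng n j) - int (ng n i) - r') + (int j - int i - r)
      = (int (ng n j) + int j) - (int (ng n b) + int b)"
      unfolding r_def r'_def by (simp add: algebra_simps)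
    show ?thesis unfolding eq by (rule dvd_diff[OF dj db])
  qed
  have dC: "int n dvd (int k * r') + (int k * r)"
  proof -
    have eq: "int k * r' + int k * r = int k * ((int (ng n b) + int b) - (int (ng n i) + int i))"
      unfolding r_def r'_def by (simp add: algebra_simps)
    show ?thesis unfolding eq by (rule dvd_mult[OF dvd_diff[OF db di]])
  qed
  have ABC: "int j - int i + r * (int k - 1) = (int j - int i - r) + int k * r" by (simp add: algebra_simps)
  have E: "Ent n \<eta> (int (ng n j) - int (ng n i) + r' * (int k - 1)) (int (ng n j) - int (ng n i) - r') (int k * r') (- t) (- z)
     = e (of_nat n ^ 2 * z) * Ent n \<eta> (int j - int i + r * (int k - 1)) (int j - int i - r) (int k * r) t z"
    by (rule Ent_neg[OF n ABC dA dB dC])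
  show ?thesis
    unfolding Rent_Ent cond r_def[symmetric] r'_def[symmetric] E by simp
qed

lemma Rent_swap:
  assumes n: "n > 0"
  shows "Rent n k \<eta> (- t) (- z) b a j i = e (of_nat n ^ 2 * z) * Rent n k \<eta> t z a b i j"
proof (cases "(a + b) mod n = (i + j) mod n")
  case False
  hence "\<not> (b + a) mod n = (j + i) mod n" by (simp add: add.commute)
  with False show ?thesis unfolding Rent_Ent by simp
next
  case True
  hence c2: "(b + a) mod n = (j + i) mod n" by (simp add: add.commute)
  have d: "int n dvd (int a + int b) - (int i + int j)" using True unfolding nat_mod_eq_dvd by simp
  define r where "r = int b - int i"
  define r' where "r' = int a - int j"
  have dA: "int n dvd (int i - int j + r' * (int k - 1)) + (int j - int i + r * (int k - 1))"
  proof -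
    have "(int i - int j + r' * (int k - 1)) + (int j - int i + r * (int k - 1)) = ((int a + int b) - (int i + int j)) * (int k - 1)"
      unfolding r_def r'_def by (simp add: algebra_simps)
    thus ?thesis using d by (simp add: dvd_mult2)
  qed
  have dB: "int n dvd (int i - int j - r') + (int j - int i - r)"
  proof -
    have "(int i - int j - r') + (int j - int i - r) = - ((int a + int b) - (int i + int j))"
      unfolding r_def r'_def by (simp add: algebra_simps)
    thus ?thesis using d by (simp add: dvd_diff_commute)
  qed
  have dC: "int n dvd (int k * r') + (int k * r)"
  proof -
    have "int k * r' + int k * r = int k * ((int a + int b) - (int i + int j))"
      unfolding r_def r'_def by (simp add: algebra_simps)
    thus ?thesis using d by (simp add: dvd_mult)
  qed
  have ABC: "int j - int i + r * (int k - 1) = (int j - int i - r) + int k * r" by (simp add: algebra_simps)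
  have E: "Ent n \<eta> (int i - int j + r' * (int k - 1)) (int i - int j - r') (int k * r') (- t) (- z)
     = e (of_nat n ^ 2 * z) * Ent n \<eta> (int j - int i + r * (int k - 1)) (int j - int i - r) (int k * r) t z"
    by (rule Ent_neg[OF n ABC dA dB dC])
  show ?thesis
    unfolding Rent_Ent r_def[symmetric] r'_def[symmetric] E using True c2 by simp
qed


lemma theta_a_zero_all:
  assumes n: "n > 0" and z: "\<forall>w. theta \<eta> w = 0"
  shows "theta_a n \<eta> \<alpha> s = 0"
proof -
  have "(\<Prod>m<n. theta \<eta> (s + of_nat m / of_nat n + of_int \<alpha> / of_nat n * \<eta>)) = 0"
    using n z by (auto intro!: prod_zero bexI[of _ 0])
  thus ?thesis unfolding theta_a_split by simp
qed

lemma Ent_zero_all: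
  assumes n: "n > 0" and z: "\<forall>w. theta \<eta> w = 0"
  shows "Ent n \<eta> A B C t s = 0"
proof -
  have "(\<Prod>a<n. theta_a n \<eta> (int a) (- s)) = 0"
    using n theta_a_zero_all[OF n z] by (auto intro!: prod_zero bexI[of _ 0])
  thus ?thesis unfolding Ent_def Rpref_def by simp
qed

lemma theta_a_cont:
  assumes s: "Im \<eta> > 0" and f: "continuous_on S f"
  shows "continuous_on S (\<lambda>x. theta_a n \<eta> \<alpha> (f x))"
  unfolding theta_a_split Ex_def using s f by (intro continuous_intros) auto

lemma ev_theta_a_nz:
  assumes n: "n > 0" and s: "Im \<eta> > 0" and nz: "theta \<eta> \<beta> \<noteq> 0"
  shows "\<forall>\<^sub>F x in at 0. theta_a n \<eta> \<alpha> x \<noteq> 0"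
proof -
  have "\<forall>\<^sub>F x in at 0. \<forall>m\<in>{..<n}. theta \<eta> (x + (of_nat m / of_nat n + of_int \<alpha> / of_nat n * \<eta>)) \<noteq> 0"
    by (rule eventually_ball_finite) (auto intro: theta_ev_nz[OF s nz])
  thus ?thesis
  proof (rule eventually_mono)
    fix x assume "\<forall>m\<in>{..<n}. theta \<eta> (x + (of_nat m / of_nat n + of_int \<alpha> / of_nat n * \<eta>)) \<noteq> 0"
    hence "(\<Prod>m<n. theta \<eta> (x + of_nat m / of_nat n + of_int \<alpha> / of_nat n * \<eta>)) \<noteq> 0"
      by (simp add: add.assoc)
    thus "theta_a n \<eta> \<alpha> x \<noteq> 0" unfolding theta_a_split by simp
  qed
qed

definition FF :: "nat \<Rightarrow> complex \<Rightarrow> int \<Rightarrow> int \<Rightarrow> complex \<Rightarrow> int \<Rightarrow> complex \<Rightarrow> complex" where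
  "FF n \<eta> a0 b0 \<tau> \<beta> s = - e (of_int \<beta> / of_nat n - of_nat n * (s + \<tau>)) * e (Ex n \<eta> (- \<beta>) (s + \<tau>) - Ex n \<eta> (- \<beta> + b0) s)"

lemma FF_nz: "FF n \<eta> a0 b0 \<tau> \<beta> s \<noteq> 0" unfolding FF_def by simp

lemma FF_cont: "continuous_on S (FF n \<eta> a0 b0 \<tau> \<beta>)"
  unfolding FF_def Ex_def by (intro continuous_intros)

lemma theta_a_negshift:
  assumes n: "n > 0" and tau: "\<tau> = (of_int a0 + of_int b0 * \<eta>) / of_nat n"
  shows "theta_a n \<eta> \<beta> (- (s + \<tau>)) = FF n \<eta> a0 b0 \<tau> \<beta> s * theta_a n \<eta> (b0 - \<beta>) s"
proof -
  have "theta_a n \<eta> \<beta> (- (s + \<tau>)) = - e (of_int \<beta> / of_nat n - of_nat n * (s + \<tau>)) * theta_a n \<eta> (- \<beta>) (s + \<tau>)"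
    by (rule theta_a_refl[OF n])
  also have "theta_a n \<eta> (- \<beta>) (s + \<tau>) = e (Ex n \<eta> (- \<beta>) (s + \<tau>) - Ex n \<eta> (- \<beta> + b0) s) * theta_a n \<eta> (- \<beta> + b0) s"
    unfolding tau by (rule theta_a_shift[OF n])
  finally show ?thesis unfolding FF_def by (simp add: mult.assoc)
qed

lemma e_tendsto[tendsto_intros]: "(f \<longlongrightarrow> l) F \<Longrightarrow> ((\<lambda>x. e (f x)) \<longlongrightarrow> e l) F"
  unfolding e_def by (intro tendsto_intros)

lemma tendsto_neg_comp:
  assumes "(f \<longlongrightarrow> L) (at (0::complex))"
  shows "((\<lambda>t. f (- t)) \<longlongrightarrow> L) (at 0)"
proof -
  have "filtermap (\<lambda>x. - x) (at (0::complex)) = at 0" using filtermap_at_minus[of "0::complex"] by simp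
  with assms have "filterlim f (nhds L) (filtermap (\<lambda>x. - x) (at (0::complex)))" by simp
  thus ?thesis by (simp add: filterlim_filtermap)
qed


lemma alg_cancel:
  fixes P x y R D K F :: complex
  assumes "x \<noteq> 0" "y \<noteq> 0" "D \<noteq> 0" "F \<noteq> 0"
  shows "(P * (x * (y * R)) / D) * K / ((F * x) * y) = P * R * K / (D * F)"
  using assms by (simp add: field_simps)

lemma conv_Ent:
  assumes n: "n > 0" and s: "Im \<eta> > 0" and ABC: "A = B + C"
    and tau: "\<tau> = (of_int a0 + of_int b0 * \<eta>) / of_nat n"
  shows "\<exists>L. ((\<lambda>t. Ent n \<eta> A B C t (t + \<tau>)) \<longlongrightarrow> L) (at 0)"
proof -
  define D where "D = (\<Prod>a\<in>{1..<n}. theta_a n \<eta> (int a) 0)"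
  define x where "x = nat ((b0 - B) mod int n)"
  define y where "y = nat (C mod int n)"
  let ?F = "FF n \<eta> a0 b0 \<tau>"
  have tA: "theta_a n \<eta> A (- (t + \<tau>) + t) = ?F A 0 * theta_a n \<eta> (b0 - A) 0" for t
  proof -
    have "- (t + \<tau>) + t = - (0 + \<tau>)" by simp
    thus ?thesis using theta_a_negshift[OF n tau, of A 0] by simp
  qed
  show ?thesis
  proof (cases "(\<forall>w. theta \<eta> w = 0) \<or> D = 0 \<or> x = y")
    case True
    have "Ent n \<eta> A B C t (t + \<tau>) = 0" for t
    proof -
      consider "\<forall>w. theta \<eta> w = 0" | "D = 0" | "x = y" using True by blast
      thus ?thesis
      proof cases
        case 1 thus ?thesis by (rule Ent_zero_all[OF n])
      next
        case 2 thus ?thesis unfolding Ent_def Rpref_def D_def[symmetric] by simp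
      next
        case 3
        have "int n dvd (b0 - A) - 0"
        proof -
          have "(b0 - B) mod int n = C mod int n" using 3 n unfolding x_def y_def by (subst (asm) eq_nat_nat_iff) auto
          hence "int n dvd (b0 - B) - C" by (simp add: mod_eq_dvd_iff)
          thus ?thesis using ABC by (simp add: algebra_simps)
        qed
        hence "theta_a n \<eta> (b0 - A) = theta_a n \<eta> 0" by (rule theta_a_cong[OF n])
        hence "theta_a n \<eta> A (- (t + \<tau>) + t) = 0" unfolding tA by (simp add: theta_a_0_0[OF n])
        thus ?thesis unfolding Ent_def by simp
      qed
    qed
    hence eq0: "(\<lambda>t. Ent n \<eta> A B C t (t + \<tau>)) = (\<lambda>_. 0)" by (rule ext)
    show ?thesis unfolding eq0 by (rule exI, rule tendsto_const)
  next
    case False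
    then obtain \<beta> where nz: "theta \<eta> \<beta> \<noteq> 0" and D: "D \<noteq> 0" and xy: "x \<noteq> y" by auto
    have xn: "x < n" and yn: "y < n" unfolding x_def y_def using n by (auto simp: nat_less_iff)
    have tB: "theta_a n \<eta> B (- (t + \<tau>)) = ?F B t * theta_a n \<eta> (int x) t" for t
    proof -
      have "theta_a n \<eta> (b0 - B) = theta_a n \<eta> (int x)"
        by (rule theta_a_cong[OF n]) (use n in \<open>simp add: x_def mod_eq_dvd_iff[symmetric]\<close>)
      thus ?thesis using theta_a_negshift[OF n tau, of B t] by simp
    qed
    have tC: "theta_a n \<eta> C = theta_a n \<eta> (int y)"
      by (rule theta_a_cong[OF n]) (use n in \<open>simp add: y_def mod_eq_dvd_iff[symmetric]\<close>)
    define R where "R t = (\<Prod>c\<in>{..<n} - {x} - {y}. theta_a n \<eta> (int c) t)" for t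
    have num: "(\<Prod>a<n. theta_a n \<eta> (int a) (- (t + \<tau>))) = (\<Prod>a<n. ?F (int a) t) * (theta_a n \<eta> (int x) t * (theta_a n \<eta> (int y) t * R t))" for t
    proof -
      have "(\<Prod>a<n. theta_a n \<eta> (int a) (- (t + \<tau>))) = (\<Prod>a<n. ?F (int a) t) * (\<Prod>a<n. theta_a n \<eta> (b0 - int a) t)"
        unfolding theta_a_negshift[OF n tau] prod.distrib ..
      also have "(\<Prod>a<n. theta_a n \<eta> (b0 - int a) t) = (\<Prod>a<n. theta_a n \<eta> (int (nat (((-1) * int a + b0) mod int n))) t)"
      proof (rule prod.cong[OF refl])
        fix a assume "a \<in> {..<n}"
        have "theta_a n \<eta> (b0 - int a) = theta_a n \<eta> (int (nat (((-1) * int a + b0) mod int n)))"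
          by (rule theta_a_cong[OF n]) (use n in \<open>simp add: mod_eq_dvd_iff[symmetric]\<close>)
        thus "theta_a n \<eta> (b0 - int a) t = theta_a n \<eta> (int (nat (((-1) * int a + b0) mod int n))) t" by simp
      qed
      also have "\<dots> = (\<Prod>c<n. theta_a n \<eta> (int c) t)"
        using prod.reindex_bij_betw[OF bij_mod[OF n, of "-1" b0], of "\<lambda>c. theta_a n \<eta> (int c) t"] by simp
      also have "\<dots> = theta_a n \<eta> (int x) t * (theta_a n \<eta> (int y) t * R t)"
      proof -
        have "(\<Prod>c<n. theta_a n \<eta> (int c) t) = theta_a n \<eta> (int x) t * (\<Prod>c\<in>{..<n} - {x}. theta_a n \<eta> (int c) t)"
          using xn by (intro prod.remove) auto
        also have "(\<Prod>c\<in>{..<n} - {x}. theta_a n \<eta> (int c) t) = theta_a n \<eta> (int y) t * R t"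
          unfolding R_def using yn xy by (intro prod.remove) auto
        finally show ?thesis .
      qed
      finally show ?thesis .
    qed
    define G where "G t = (\<Prod>a<n. ?F (int a) t) * R t * (?F A 0 * theta_a n \<eta> (b0 - A) 0) / (D * ?F B t)" for t
    have ev: "\<forall>\<^sub>F t in at 0. theta_a n \<eta> (int x) t \<noteq> 0 \<and> theta_a n \<eta> (int y) t \<noteq> 0"
      using ev_theta_a_nz[OF n s nz] by (intro eventually_conj) auto
    have ev2: "\<forall>\<^sub>F t in at 0. Ent n \<eta> A B C t (t + \<tau>) = G t"
    proof (rule eventually_mono[OF ev])
      fix t assume h: "theta_a n \<eta> (int x) t \<noteq> 0 \<and> theta_a n \<eta> (int y) t \<noteq> 0"
      have Fn: "?F B t \<noteq> 0" by (rule FF_nz)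
      show "Ent n \<eta> A B C t (t + \<tau>) = G t"
        unfolding Ent_def Rpref_def D_def[symmetric] num tA tB tC G_def
        using h D Fn by (intro alg_cancel) auto
    qed
    have "continuous_on UNIV G"
    proof -
      have c1: "continuous_on UNIV (\<lambda>t. \<Prod>a<n. ?F (int a) t)" by (intro continuous_on_prod FF_cont)
      have c2: "continuous_on UNIV R" unfolding R_def
        by (intro continuous_on_prod theta_a_cont[OF s] continuous_on_id)
      have c3: "continuous_on UNIV (\<lambda>t. D * ?F B t)" by (intro continuous_on_mult continuous_on_const FF_cont)
      have "continuous_on UNIV (\<lambda>t. ((\<Prod>a<n. ?F (int a) t) * R t * (?F A 0 * theta_a n \<eta> (b0 - A) 0)) / (D * ?F B t))"
        by (rule continuous_on_divide[OF continuous_on_mult[OF continuous_on_mult[OF c1 c2] continuous_on_const] c3])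
           (use D FF_nz in auto)
      thus ?thesis unfolding G_def .
    qed
    hence "isCont G 0" by (simp add: continuous_on_eq_continuous_at)
    hence "(G \<longlongrightarrow> G 0) (at 0)" by (simp add: isCont_def)
    hence "((\<lambda>t. Ent n \<eta> A B C t (t + \<tau>)) \<longlongrightarrow> G 0) (at 0)"
      by (rule iffD2[OF tendsto_cong[OF ev2]])
    thus ?thesis by (rule exI)
  qed
qed


lemma lat_neg: "(- \<tau> \<in> lat_n n \<eta>) \<longleftrightarrow> (\<tau> \<in> lat_n n \<eta>)"
proof
  assume "- \<tau> \<in> lat_n n \<eta>"
  then obtain a b where "- \<tau> = (of_int a + of_int b * \<eta>) / of_nat n" unfolding lat_n_def by auto
  hence "\<tau> = - ((of_int a + of_int b * \<eta>) / of_nat n)" by (metis minus_minus)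
  also have "\<dots> = (of_int (- a) + of_int (- b) * \<eta>) / of_nat n" by (simp add: minus_divide_left)
  finally have "\<tau> = (of_int (- a) + of_int (- b) * \<eta>) / of_nat n" .
  thus "\<tau> \<in> lat_n n \<eta>" unfolding lat_n_def by blast
next
  assume "\<tau> \<in> lat_n n \<eta>"
  then obtain a b where "\<tau> = (of_int a + of_int b * \<eta>) / of_nat n" unfolding lat_n_def by auto
  hence "- \<tau> = - ((of_int a + of_int b * \<eta>) / of_nat n)" by simp
  also have "\<dots> = (of_int (- a) + of_int (- b) * \<eta>) / of_nat n" by (simp add: minus_divide_left)
  finally have "- \<tau> = (of_int (- a) + of_int (- b) * \<eta>) / of_nat n" .
  thus "- \<tau> \<in> lat_n n \<eta>" unfolding lat_n_def by blast
qed

lemma conv_Rent: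
  assumes n: "n > 0" and s: "Im \<eta> > 0" and lat: "\<tau> \<in> lat_n n \<eta>"
  shows "\<exists>L. ((\<lambda>t. Rent n k \<eta> t (t + \<tau>) a b i j) \<longlongrightarrow> L) (at 0)"
proof -
  obtain a0 b0 where tau: "\<tau> = (of_int a0 + of_int b0 * \<eta>) / of_nat n" using lat unfolding lat_n_def by auto
  show ?thesis
  proof (cases "(a + b) mod n = (i + j) mod n")
    case False
    hence "(\<lambda>t. Rent n k \<eta> t (t + \<tau>) a b i j) = (\<lambda>_. 0)" unfolding Rent_Ent by simp
    thus ?thesis by (intro exI[of _ 0]) simp
  next
    case True
    have ABC: "int j - int i + (int b - int i) * (int k - 1) = (int j - int i - (int b - int i)) + int k * (int b - int i)"
      by (simp add: algebra_simps)
    have "(\<lambda>t. Rent n k \<eta> t (t + \<tau>) a b i j) = (\<lambda>t. Ent n \<eta> (int j - int i + (int b - int i) * (int k - 1)) (int j - int i - (int b - int i)) (int k * (int b - int i)) t (t + \<tau>))"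
      unfolding Rent_Ent using True by simp
    thus ?thesis using conv_Ent[OF n s ABC tau] by simp
  qed
qed

lemma Rrel_rel:
  assumes n: "n > 0" and s: "Im \<eta> > 0" and lt: "a < n" "b < n" "i < n" "j < n"
  shows "Rrel n k \<eta> (- \<tau>) (ng n a) (ng n b) (ng n i) (ng n j) = e (of_nat n ^ 2 * \<tau>) * Rrel n k \<eta> \<tau> a b i j
       \<and> Rrel n k \<eta> (- \<tau>) b a j i = e (of_nat n ^ 2 * \<tau>) * Rrel n k \<eta> \<tau> a b i j"
proof (cases "\<tau> \<in> lat_n n \<eta>")
  case False
  hence F2: "- \<tau> \<notin> lat_n n \<eta>" using lat_neg by blast
  show ?thesis unfolding Rrel_def using False F2
    using Rent_negN[OF n lt, of k \<eta> \<tau> \<tau>] Rent_swap[OF n, of k \<eta> \<tau> \<tau> b a j i] by simp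
next
  case True
  hence T2: "- \<tau> \<in> lat_n n \<eta>" using lat_neg by blast
  obtain L where L: "((\<lambda>t. Rent n k \<eta> t (t + \<tau>) a b i j) \<longlongrightarrow> L) (at 0)"
    using conv_Rent[OF n s True] by blast
  have LL: "Lim (at 0) (\<lambda>t. Rent n k \<eta> t (t + \<tau>) a b i j) = L"
    by (rule tendsto_Lim[OF _ L]) simp
  have lim2: "((\<lambda>t. e (of_nat n ^ 2 * (- t + \<tau>)) * Rent n k \<eta> (- t) (- t + \<tau>) a b i j) \<longlongrightarrow> e (of_nat n ^ 2 * (- 0 + \<tau>)) * L) (at 0)"
    by (intro tendsto_intros tendsto_neg_comp[OF L])
  hence lim3: "((\<lambda>t. e (of_nat n ^ 2 * (- t + \<tau>)) * Rent n k \<eta> (- t) (- t + \<tau>) a b i j) \<longlongrightarrow> e (of_nat n ^ 2 * \<tau>) * L) (at 0)"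
    by simp
  have eq1: "Rent n k \<eta> t (t + - \<tau>) (ng n a) (ng n b) (ng n i) (ng n j) = e (of_nat n ^ 2 * (- t + \<tau>)) * Rent n k \<eta> (- t) (- t + \<tau>) a b i j" for t
    using Rent_negN[OF n lt, of k \<eta> "- t" "- t + \<tau>"] by simp
  have eq2: "Rent n k \<eta> t (t + - \<tau>) b a j i = e (of_nat n ^ 2 * (- t + \<tau>)) * Rent n k \<eta> (- t) (- t + \<tau>) a b i j" for t
    using Rent_swap[OF n, of k \<eta> "- t" "- t + \<tau>" b a j i] by simp
  have "Lim (at 0) (\<lambda>t. Rent n k \<eta> t (t + - \<tau>) (ng n a) (ng n b) (ng n i) (ng n j)) = e (of_nat n ^ 2 * \<tau>) * L"
    unfolding eq1 by (rule tendsto_Lim[OF _ lim3]) simp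
  moreover have "Lim (at 0) (\<lambda>t. Rent n k \<eta> t (t + - \<tau>) b a j i) = e (of_nat n ^ 2 * \<tau>) * L"
    unfolding eq2 by (rule tendsto_Lim[OF _ lim3]) simp
  ultimately show ?thesis unfolding Rrel_def using True T2 LL by simp
qed


definition allb :: "nat \<Rightarrow> nat list \<Rightarrow> bool" where "allb n w \<longleftrightarrow> (\<forall>x\<in>set w. x < n)"

lemma TV_supp: "f \<in> TV n \<Longrightarrow> f w \<noteq> 0 \<Longrightarrow> allb n w"
  unfolding TV_def allb_def by auto

lemma TV_zero: "(\<lambda>_. 0) \<in> TV n" unfolding TV_def by simp

lemma TV_add: "f \<in> TV n \<Longrightarrow> g \<in> TV n \<Longrightarrow> (\<lambda>w. f w + g w) \<in> TV n"
proof -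
  assume f: "f \<in> TV n" and g: "g \<in> TV n"
  have "{w. f w + g w \<noteq> 0} \<subseteq> {w. f w \<noteq> 0} \<union> {w. g w \<noteq> 0}" by auto
  moreover have "finite {w. f w \<noteq> 0}" "finite {w. g w \<noteq> 0}" using f g unfolding TV_def by auto
  ultimately have "finite {w. f w + g w \<noteq> 0}" by (meson finite_UnI finite_subset)
  moreover have "\<forall>w. f w + g w \<noteq> 0 \<longrightarrow> (\<forall>x\<in>set w. x < n)"
  proof (intro allI impI)
    fix w assume "f w + g w \<noteq> 0"
    hence "f w \<noteq> 0 \<or> g w \<noteq> 0" by auto
    thus "\<forall>x\<in>set w. x < n" using f g unfolding TV_def by blast
  qed
  ultimately show ?thesis unfolding TV_def by blast
qed

lemma TV_scale: "f \<in> TV n \<Longrightarrow> (\<lambda>w. c * f w) \<in> TV n"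
proof -
  assume f: "f \<in> TV n"
  have "{w. c * f w \<noteq> 0} \<subseteq> {w. f w \<noteq> 0}" by auto
  thus ?thesis using f unfolding TV_def by (auto intro: finite_subset)
qed

lemma TV_diff: "f \<in> TV n \<Longrightarrow> g \<in> TV n \<Longrightarrow> (\<lambda>w. f w - g w) \<in> TV n"
  using TV_add[of f n "\<lambda>w. (-1) * g w"] TV_scale[of g n "-1"] by simp

lemma TV_tone: "tone \<in> TV n" unfolding TV_def tone_def by simp

lemma TV_xgen: "\<alpha> < n \<Longrightarrow> xgen \<alpha> \<in> TV n" unfolding TV_def xgen_def by simp

lemma TV_tmul:
  assumes f: "f \<in> TV n" and g: "g \<in> TV n"
  shows "tmul f g \<in> TV n"
proof -
  let ?Sf = "{w. f w \<noteq> 0}" and ?Sg = "{w. g w \<noteq> 0}"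
  have sub: "{w. tmul f g w \<noteq> 0} \<subseteq> (\<lambda>(u, v). u @ v) ` (?Sf \<times> ?Sg)"
  proof
    fix w assume "w \<in> {w. tmul f g w \<noteq> 0}"
    hence w: "tmul f g w \<noteq> 0" by simp
    have "\<exists>i. f (take i w) * g (drop i w) \<noteq> 0"
    proof (rule ccontr)
      assume "\<not> ?thesis"
      hence "tmul f g w = 0" unfolding tmul_def by (intro sum.neutral) auto
      with w show False by simp
    qed
    then obtain i where "f (take i w) * g (drop i w) \<noteq> 0" by blast
    thus "w \<in> (\<lambda>(u, v). u @ v) ` (?Sf \<times> ?Sg)"
      by (intro image_eqI[of _ _ "(take i w, drop i w)"]) auto
  qed
  have "finite ?Sf" "finite ?Sg" using f g unfolding TV_def by auto
  hence fin: "finite {w. tmul f g w \<noteq> 0}"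
    using finite_subset[OF sub finite_imageI[OF finite_cartesian_product]] by blast
  have "\<forall>x\<in>set w. x < n" if "tmul f g w \<noteq> 0" for w
  proof -
    have "\<exists>i. f (take i w) * g (drop i w) \<noteq> 0"
    proof (rule ccontr)
      assume "\<not> ?thesis"
      hence "tmul f g w = 0" unfolding tmul_def by (intro sum.neutral) auto
      with that show False by simp
    qed
    then obtain i where "f (take i w) * g (drop i w) \<noteq> 0" by blast
    hence "allb n (take i w)" "allb n (drop i w)" using f g TV_supp by auto
    hence "allb n (take i w @ drop i w)" unfolding allb_def set_append by blast
    thus ?thesis unfolding allb_def by simp
  qed
  with fin show ?thesis unfolding TV_def by blast
qed

lemma tmul_add_left: "tmul (\<lambda>w. f w + g w) h = (\<lambda>w. tmul f h w + tmul g h w)"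
  unfolding tmul_def by (simp add: distrib_right sum.distrib)

lemma tmul_add_right: "tmul h (\<lambda>w. f w + g w) = (\<lambda>w. tmul h f w + tmul h g w)"
  unfolding tmul_def by (simp add: distrib_left sum.distrib)

lemma tmul_diff_left: "tmul (\<lambda>w. f w - g w) h = (\<lambda>w. tmul f h w - tmul g h w)"
  unfolding tmul_def by (simp add: left_diff_distrib sum_subtractf)

lemma tmul_diff_right: "tmul h (\<lambda>w. f w - g w) = (\<lambda>w. tmul h f w - tmul h g w)"
  unfolding tmul_def by (simp add: right_diff_distrib sum_subtractf)

lemma tmul_scale_left: "tmul (\<lambda>w. c * f w) h = (\<lambda>w. c * tmul f h w)"
  unfolding tmul_def by (simp add: sum_distrib_left mult.assoc)

lemma tmul_tone_left: "tmul (\<lambda>w. c * tone w) x = (\<lambda>w. c * x w)"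
proof
  fix w
  have "tmul (\<lambda>w. c * tone w) x w = (\<Sum>i\<le>length w. if i = 0 then c * x w else 0)"
    unfolding tmul_def tone_def by (rule sum.cong) auto
  thus "tmul (\<lambda>w. c * tone w) x w = c * x w" by simp
qed

lemma gen_ideal_TV': "x \<in> gen_ideal n K \<Longrightarrow> K \<subseteq> TV n \<Longrightarrow> x \<in> TV n"
  by (induction rule: gen_ideal.induct) (auto intro: TV_zero TV_add TV_tmul)

lemma gen_ideal_TV: "K \<subseteq> TV n \<Longrightarrow> x \<in> gen_ideal n K \<Longrightarrow> x \<in> TV n"
  using gen_ideal_TV' by blast

lemma gen_ideal_scale: "x \<in> gen_ideal n K \<Longrightarrow> (\<lambda>w. c * x w) \<in> gen_ideal n K"
  using gen_ideal.lmul[of x n K "\<lambda>w. c * tone w"] TV_scale[OF TV_tone] by (simp add: tmul_tone_left)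

lemma gen_ideal_diff: "x \<in> gen_ideal n K \<Longrightarrow> y \<in> gen_ideal n K \<Longrightarrow> (\<lambda>w. x w - y w) \<in> gen_ideal n K"
  using gen_ideal.add[of x n K "\<lambda>w. (-1) * y w"] gen_ideal_scale[of y n K "-1"] by simp


locale idl =
  fixes n :: nat and Kset :: "(nat list \<Rightarrow> complex) set"
  assumes KTV: "Kset \<subseteq> TV n"
begin

abbreviation "I \<equiv> gen_ideal n Kset"

lemma I_TV: "x \<in> I \<Longrightarrow> x \<in> TV n" using gen_ideal_TV[OF KTV] .

lemma I_zero: "(\<lambda>_. 0) \<in> I" by (rule gen_ideal.zero)

lemma self_mem: "f \<in> TV n \<Longrightarrow> f \<in> qcls n I f"
  unfolding qcls_def using I_zero by simp

lemma qcls_eq: "f \<in> TV n \<Longrightarrow> g \<in> TV n \<Longrightarrow> (qcls n I f = qcls n I g) \<longleftrightarrow> (\<lambda>w. f w - g w) \<in> I"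
proof
  assume f: "f \<in> TV n" and g: "g \<in> TV n" and eq: "qcls n I f = qcls n I g"
  have "g \<in> qcls n I f" using self_mem[OF g] eq by simp
  thus "(\<lambda>w. f w - g w) \<in> I" unfolding qcls_def by simp
next
  assume f: "f \<in> TV n" and g: "g \<in> TV n" and d: "(\<lambda>w. f w - g w) \<in> I"
  show "qcls n I f = qcls n I g"
  proof (rule set_eqI)
    fix h
    have 1: "(\<lambda>w. g w - h w) = (\<lambda>w. (f w - h w) - (f w - g w))" by (rule ext) simp
    have 2: "(\<lambda>w. f w - h w) = (\<lambda>w. (f w - g w) + (g w - h w))" by (rule ext) simp
    show "h \<in> qcls n I f \<longleftrightarrow> h \<in> qcls n I g"
    proof
      assume "h \<in> qcls n I f"
      hence h: "h \<in> TV n" "(\<lambda>w. f w - h w) \<in> I" unfolding qcls_def by auto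
      have "(\<lambda>w. (f w - h w) - (f w - g w)) \<in> I" by (rule gen_ideal_diff[OF h(2) d])
      thus "h \<in> qcls n I g" unfolding qcls_def 1[symmetric] using h by simp
    next
      assume "h \<in> qcls n I g"
      hence h: "h \<in> TV n" "(\<lambda>w. g w - h w) \<in> I" unfolding qcls_def by auto
      have "(\<lambda>w. (f w - g w) + (g w - h w)) \<in> I" by (rule gen_ideal.add[OF d h(2)])
      thus "h \<in> qcls n I f" unfolding qcls_def 2[symmetric] using h by simp
    qed
  qed
qed

lemma rep_cls: "f \<in> TV n \<Longrightarrow> qrep (qcls n I f) \<in> TV n \<and> (\<lambda>w. f w - qrep (qcls n I f) w) \<in> I"
proof -
  assume f: "f \<in> TV n"
  have "qrep (qcls n I f) \<in> qcls n I f" unfolding qrep_def by (rule someI[where P="\<lambda>x. x \<in> qcls n I f", OF self_mem[OF f]])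
  thus ?thesis unfolding qcls_def by simp
qed

lemma rep_car: "A \<in> qcar n I \<Longrightarrow> qrep A \<in> TV n \<and> A = qcls n I (qrep A)"
proof -
  assume "A \<in> qcar n I"
  then obtain f where f: "f \<in> TV n" and A: "A = qcls n I f" unfolding qcar_def by auto
  have r: "qrep A \<in> TV n" "(\<lambda>w. f w - qrep A w) \<in> I" using rep_cls[OF f] A by auto
  thus ?thesis using qcls_eq[OF f r(1)] A by simp
qed

lemma cong_add:
  assumes "u \<in> TV n" "u' \<in> TV n" "v \<in> TV n" "v' \<in> TV n" "(\<lambda>w. u w - u' w) \<in> I" "(\<lambda>w. v w - v' w) \<in> I"
  shows "qcls n I (\<lambda>w. u w + v w) = qcls n I (\<lambda>w. u' w + v' w)"
proof -
  have "(\<lambda>w. (u w + v w) - (u' w + v' w)) = (\<lambda>w. (u w - u' w) + (v w - v' w))" by (rule ext) simp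
  moreover have "(\<lambda>w. (u w - u' w) + (v w - v' w)) \<in> I" using assms by (intro gen_ideal.add)
  ultimately show ?thesis using assms by (subst qcls_eq) (auto intro: TV_add)
qed

lemma cong_scale:
  assumes "u \<in> TV n" "u' \<in> TV n" "(\<lambda>w. u w - u' w) \<in> I"
  shows "qcls n I (\<lambda>w. c * u w) = qcls n I (\<lambda>w. c * u' w)"
proof -
  have "(\<lambda>w. c * u w - c * u' w) = (\<lambda>w. c * (u w - u' w))" by (rule ext) (simp add: algebra_simps)
  moreover have "(\<lambda>w. c * (u w - u' w)) \<in> I" using assms by (intro gen_ideal_scale)
  ultimately show ?thesis using assms by (subst qcls_eq) (auto intro: TV_scale)
qed

lemma cong_mul:
  assumes "u \<in> TV n" "u' \<in> TV n" "v \<in> TV n" "v' \<in> TV n" "(\<lambda>w. u w - u' w) \<in> I" "(\<lambda>w. v w - v' w) \<in> I"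
  shows "qcls n I (tmul u v) = qcls n I (tmul u' v')"
proof -
  have "(\<lambda>w. tmul u v w - tmul u' v' w) = (\<lambda>w. tmul (\<lambda>w. u w - u' w) v w + tmul u' (\<lambda>w. v w - v' w) w)"
    unfolding tmul_diff_left tmul_diff_right by (rule ext) simp
  moreover have "(\<lambda>w. tmul (\<lambda>w. u w - u' w) v w + tmul u' (\<lambda>w. v w - v' w) w) \<in> I"
    using assms by (intro gen_ideal.add gen_ideal.lmul gen_ideal.rmul)
  ultimately show ?thesis using assms by (subst qcls_eq) (auto intro: TV_tmul)
qed

end

definition good :: "nat \<Rightarrow> ((nat list \<Rightarrow> complex) \<Rightarrow> (nat list \<Rightarrow> complex)) \<Rightarrow> bool \<Rightarrow> bool" where
  "good n \<sigma> op \<longleftrightarrow> (\<forall>f\<in>TV n. \<sigma> f \<in> TV n \<and> \<sigma> (\<sigma> f) = f)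
     \<and> \<sigma> (\<lambda>_. 0) = (\<lambda>_. 0)
     \<and> (\<forall>f g. \<sigma> (\<lambda>w. f w + g w) = (\<lambda>w. \<sigma> f w + \<sigma> g w))
     \<and> (\<forall>c f. \<sigma> (\<lambda>w. c * f w) = (\<lambda>w. c * \<sigma> f w))
     \<and> \<sigma> tone = tone
     \<and> (\<forall>f\<in>TV n. \<forall>g\<in>TV n. \<sigma> (tmul f g) = (if op then tmul (\<sigma> g) (\<sigma> f) else tmul (\<sigma> f) (\<sigma> g)))"

lemma goodD:
  assumes "good n \<sigma> op"
  shows "\<And>f. f \<in> TV n \<Longrightarrow> \<sigma> f \<in> TV n" "\<And>f. f \<in> TV n \<Longrightarrow> \<sigma> (\<sigma> f) = f"
    "\<sigma> (\<lambda>_. 0) = (\<lambda>_. 0)" "\<And>f g. \<sigma> (\<lambda>w. f w + g w) = (\<lambda>w. \<sigma> f w + \<sigma> g w)"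
    "\<And>c f. \<sigma> (\<lambda>w. c * f w) = (\<lambda>w. c * \<sigma> f w)" "\<sigma> tone = tone"
    "\<And>f g. f \<in> TV n \<Longrightarrow> g \<in> TV n \<Longrightarrow> \<sigma> (tmul f g) = (if op then tmul (\<sigma> g) (\<sigma> f) else tmul (\<sigma> f) (\<sigma> g))"
  using assms unfolding good_def by auto

lemma good_diff: "good n \<sigma> op \<Longrightarrow> \<sigma> (\<lambda>w. f w - g w) = (\<lambda>w. \<sigma> f w - \<sigma> g w)"
proof -
  assume G: "good n \<sigma> op"
  have "\<sigma> (\<lambda>w. f w - g w) = \<sigma> (\<lambda>w. f w + (-1) * g w)" by simp
  also have "\<dots> = (\<lambda>w. \<sigma> f w + \<sigma> (\<lambda>w. (-1) * g w) w)" by (rule goodD(4)[OF G])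
  also have "\<sigma> (\<lambda>w. (-1) * g w) = (\<lambda>w. (-1) * \<sigma> g w)" by (rule goodD(5)[OF G])
  finally show ?thesis by simp
qed

lemma ideal_map_sub:
  assumes G: "good n \<sigma> op" and KTV: "K \<subseteq> TV n" and KK: "\<sigma> ` K \<subseteq> K'"
  shows "x \<in> gen_ideal n K \<Longrightarrow> \<sigma> x \<in> gen_ideal n K'"
proof (induction rule: gen_ideal.induct)
  case (gen x) thus ?case using KK by (auto intro: gen_ideal.gen)
next
  case zero thus ?case using G unfolding good_def by (auto intro: gen_ideal.zero)
next
  case (add x y) thus ?case using G unfolding good_def by (auto intro: gen_ideal.add)
next
  case (lmul x t)
  have xt: "x \<in> TV n" using gen_ideal_TV[OF KTV lmul.hyps(1)] .
  have st: "\<sigma> t \<in> TV n" using G lmul.hyps(2) unfolding good_def by blast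
  have "\<sigma> (tmul t x) = (if op then tmul (\<sigma> x) (\<sigma> t) else tmul (\<sigma> t) (\<sigma> x))"
    using G lmul.hyps(2) xt unfolding good_def by blast
  thus ?case using lmul.IH st by (auto intro: gen_ideal.lmul gen_ideal.rmul)
next
  case (rmul x t)
  have xt: "x \<in> TV n" using gen_ideal_TV[OF KTV rmul.hyps(1)] .
  have st: "\<sigma> t \<in> TV n" using G rmul.hyps(2) unfolding good_def by blast
  have "\<sigma> (tmul x t) = (if op then tmul (\<sigma> t) (\<sigma> x) else tmul (\<sigma> x) (\<sigma> t))"
    using G rmul.hyps(2) xt unfolding good_def by blast
  thus ?case using rmul.IH st by (auto intro: gen_ideal.lmul gen_ideal.rmul)
qed

lemma ideal_map:
  assumes G: "good n \<sigma> op" and KTV: "K \<subseteq> TV n" and KK: "\<sigma> ` K = K'"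
  shows "\<sigma> ` gen_ideal n K = gen_ideal n K'"
proof
  show "\<sigma> ` gen_ideal n K \<subseteq> gen_ideal n K'" using ideal_map_sub[OF G KTV] KK by blast
next
  have inv: "\<And>f. f \<in> TV n \<Longrightarrow> \<sigma> (\<sigma> f) = f" and tv: "\<And>f. f \<in> TV n \<Longrightarrow> \<sigma> f \<in> TV n"
    using G unfolding good_def by auto
  have K'TV: "K' \<subseteq> TV n" using KK KTV tv by auto
  have "\<sigma> ` K' = K"
  proof
    show "\<sigma> ` K' \<subseteq> K" using KK KTV inv by auto
    show "K \<subseteq> \<sigma> ` K'"
    proof
      fix x assume x: "x \<in> K"
      hence "x = \<sigma> (\<sigma> x)" using inv KTV by auto
      thus "x \<in> \<sigma> ` K'" using x KK by blast
    qed
  qed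
  hence sub: "\<sigma> ` gen_ideal n K' \<subseteq> gen_ideal n K" using ideal_map_sub[OF G K'TV] by blast
  show "gen_ideal n K' \<subseteq> \<sigma> ` gen_ideal n K"
  proof
    fix x assume x: "x \<in> gen_ideal n K'"
    have "x = \<sigma> (\<sigma> x)" using inv gen_ideal_TV[OF K'TV x] by simp
    moreover have "\<sigma> x \<in> gen_ideal n K" using sub x by blast
    ultimately show "x \<in> \<sigma> ` gen_ideal n K" by blast
  qed
qed


context
  fixes n :: nat and \<sigma> :: "(nat list \<Rightarrow> complex) \<Rightarrow> (nat list \<Rightarrow> complex)" and op :: bool
    and K K' :: "(nat list \<Rightarrow> complex) set"
  assumes G: "good n \<sigma> op" and KTV: "K \<subseteq> TV n" and K'TV: "K' \<subseteq> TV n"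
    and IJ: "\<sigma> ` gen_ideal n K = gen_ideal n K'"
begin

interpretation A: idl n K by unfold_locales (rule KTV)
interpretation B: idl n K' by unfold_locales (rule K'TV)

definition Phi where "Phi A = qcls n (gen_ideal n K') (\<sigma> (qrep A))"

lemma JI: "\<sigma> ` gen_ideal n K' = gen_ideal n K"
proof -
  have "\<sigma> ` gen_ideal n K' = \<sigma> ` \<sigma> ` gen_ideal n K" using IJ by simp
  also have "\<dots> = gen_ideal n K"
  proof -
    have "\<sigma> (\<sigma> x) = x" if "x \<in> gen_ideal n K" for x using goodD(2)[OF G] A.I_TV[OF that] by simp
    thus ?thesis by (force simp: image_iff)
  qed
  finally show ?thesis .
qed

lemma mapI: "x \<in> gen_ideal n K \<Longrightarrow> \<sigma> x \<in> gen_ideal n K'" using IJ by blast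
lemma mapJ: "x \<in> gen_ideal n K' \<Longrightarrow> \<sigma> x \<in> gen_ideal n K" using JI by blast

lemma Phi_cls: "f \<in> TV n \<Longrightarrow> Phi (qcls n (gen_ideal n K) f) = qcls n (gen_ideal n K') (\<sigma> f)"
proof -
  assume f: "f \<in> TV n"
  define r where "r = qrep (qcls n (gen_ideal n K) f)"
  have r: "r \<in> TV n" "(\<lambda>w. f w - r w) \<in> gen_ideal n K" using A.rep_cls[OF f] unfolding r_def by auto
  have "\<sigma> (\<lambda>w. f w - r w) \<in> gen_ideal n K'" by (rule mapI[OF r(2)])
  hence d: "(\<lambda>w. \<sigma> f w - \<sigma> r w) \<in> gen_ideal n K'" using good_diff[OF G] by simp
  have "qcls n (gen_ideal n K') (\<sigma> f) = qcls n (gen_ideal n K') (\<sigma> r)"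
    using B.qcls_eq[OF goodD(1)[OF G f] goodD(1)[OF G r(1)]] d by simp
  thus ?thesis unfolding Phi_def r_def by simp
qed

lemma Phi_bij: "bij_betw Phi (qcar n (gen_ideal n K)) (qcar n (gen_ideal n K'))"
proof (rule bij_betw_imageI)
  show "inj_on Phi (qcar n (gen_ideal n K))"
  proof (rule inj_onI)
    fix X Y assume X: "X \<in> qcar n (gen_ideal n K)" and Y: "Y \<in> qcar n (gen_ideal n K)" and eq: "Phi X = Phi Y"
    obtain f g where f: "f \<in> TV n" "X = qcls n (gen_ideal n K) f" and g: "g \<in> TV n" "Y = qcls n (gen_ideal n K) g"
      using X Y unfolding qcar_def by auto
    have "qcls n (gen_ideal n K') (\<sigma> f) = qcls n (gen_ideal n K') (\<sigma> g)" using eq f g Phi_cls by simp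
    hence "(\<lambda>w. \<sigma> f w - \<sigma> g w) \<in> gen_ideal n K'"
      using B.qcls_eq[OF goodD(1)[OF G f(1)] goodD(1)[OF G g(1)]] by simp
    hence "\<sigma> (\<lambda>w. \<sigma> f w - \<sigma> g w) \<in> gen_ideal n K" by (rule mapJ)
    hence "(\<lambda>w. f w - g w) \<in> gen_ideal n K"
      using good_diff[OF G, of "\<sigma> f" "\<sigma> g"] goodD(2)[OF G f(1)] goodD(2)[OF G g(1)] by simp
    thus "X = Y" using A.qcls_eq[OF f(1) g(1)] f g by simp
  qed
next
  show "Phi ` qcar n (gen_ideal n K) = qcar n (gen_ideal n K')"
  proof
    show "Phi ` qcar n (gen_ideal n K) \<subseteq> qcar n (gen_ideal n K')"
      unfolding qcar_def using Phi_cls goodD(1)[OF G] by auto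
  next
    show "qcar n (gen_ideal n K') \<subseteq> Phi ` qcar n (gen_ideal n K)"
    proof
      fix Z assume "Z \<in> qcar n (gen_ideal n K')"
      then obtain h where h: "h \<in> TV n" "Z = qcls n (gen_ideal n K') h" unfolding qcar_def by auto
      have "Phi (qcls n (gen_ideal n K) (\<sigma> h)) = Z"
        using Phi_cls[OF goodD(1)[OF G h(1)]] goodD(2)[OF G h(1)] h(2) by simp
      moreover have "qcls n (gen_ideal n K) (\<sigma> h) \<in> qcar n (gen_ideal n K)"
        unfolding qcar_def using goodD(1)[OF G h(1)] by auto
      ultimately show "Z \<in> Phi ` qcar n (gen_ideal n K)" by blast
    qed
  qed
qed

lemma Phi_one: "Phi (qcls n (gen_ideal n K) tone) = qcls n (gen_ideal n K') tone"
  using Phi_cls[OF TV_tone] goodD(6)[OF G] by simp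

lemma Phi_rep:
  assumes X: "X \<in> qcar n (gen_ideal n K)"
  shows "qrep X \<in> TV n" "\<sigma> (qrep X) \<in> TV n" "qrep (Phi X) \<in> TV n"
    "(\<lambda>w. \<sigma> (qrep X) w - qrep (Phi X) w) \<in> gen_ideal n K'"
proof -
  show r: "qrep X \<in> TV n" using A.rep_car[OF X] by simp
  show s: "\<sigma> (qrep X) \<in> TV n" by (rule goodD(1)[OF G r])
  have "Phi X = qcls n (gen_ideal n K') (\<sigma> (qrep X))" unfolding Phi_def ..
  thus "qrep (Phi X) \<in> TV n" "(\<lambda>w. \<sigma> (qrep X) w - qrep (Phi X) w) \<in> gen_ideal n K'"
    using B.rep_cls[OF s] by auto
qed

lemma Phi_add:
  assumes X: "X \<in> qcar n (gen_ideal n K)" and Y: "Y \<in> qcar n (gen_ideal n K)"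
  shows "Phi (qadd n (gen_ideal n K) X Y) = qadd n (gen_ideal n K') (Phi X) (Phi Y)"
proof -
  note x = Phi_rep[OF X] and y = Phi_rep[OF Y]
  have "Phi (qadd n (gen_ideal n K) X Y) = qcls n (gen_ideal n K') (\<sigma> (\<lambda>w. qrep X w + qrep Y w))"
    unfolding qadd_def by (rule Phi_cls) (intro TV_add x(1) y(1))
  also have "\<sigma> (\<lambda>w. qrep X w + qrep Y w) = (\<lambda>w. \<sigma> (qrep X) w + \<sigma> (qrep Y) w)" by (rule goodD(4)[OF G])
  also have "qcls n (gen_ideal n K') \<dots> = qadd n (gen_ideal n K') (Phi X) (Phi Y)"
    unfolding qadd_def by (rule B.cong_add) (use x y in auto)
  finally show ?thesis .
qed

lemma Phi_scale:
  assumes X: "X \<in> qcar n (gen_ideal n K)"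
  shows "Phi (qscale n (gen_ideal n K) c X) = qscale n (gen_ideal n K') c (Phi X)"
proof -
  note x = Phi_rep[OF X]
  have "Phi (qscale n (gen_ideal n K) c X) = qcls n (gen_ideal n K') (\<sigma> (\<lambda>w. c * qrep X w))"
    unfolding qscale_def by (rule Phi_cls) (intro TV_scale x(1))
  also have "\<sigma> (\<lambda>w. c * qrep X w) = (\<lambda>w. c * \<sigma> (qrep X) w)" by (rule goodD(5)[OF G])
  also have "qcls n (gen_ideal n K') \<dots> = qscale n (gen_ideal n K') c (Phi X)"
    unfolding qscale_def by (rule B.cong_scale) (use x in auto)
  finally show ?thesis .
qed

lemma Phi_mul:
  assumes X: "X \<in> qcar n (gen_ideal n K)" and Y: "Y \<in> qcar n (gen_ideal n K)"
  shows "Phi (qmul n (gen_ideal n K) X Y) =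
     (if op then qmul n (gen_ideal n K') (Phi Y) (Phi X) else qmul n (gen_ideal n K') (Phi X) (Phi Y))"
proof -
  note x = Phi_rep[OF X] and y = Phi_rep[OF Y]
  have eq1: "Phi (qmul n (gen_ideal n K) X Y) = qcls n (gen_ideal n K') (\<sigma> (tmul (qrep X) (qrep Y)))"
    unfolding qmul_def by (rule Phi_cls) (intro TV_tmul x(1) y(1))
  have eq2: "\<sigma> (tmul (qrep X) (qrep Y)) = (if op then tmul (\<sigma> (qrep Y)) (\<sigma> (qrep X)) else tmul (\<sigma> (qrep X)) (\<sigma> (qrep Y)))"
    by (rule goodD(7)[OF G x(1) y(1)])
  show ?thesis
  proof (cases op)
    case True
    have "qcls n (gen_ideal n K') (tmul (\<sigma> (qrep Y)) (\<sigma> (qrep X))) = qmul n (gen_ideal n K') (Phi Y) (Phi X)"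
      unfolding qmul_def by (rule B.cong_mul) (use x y in auto)
    thus ?thesis using True eq1 eq2 by simp
  next
    case False
    have "qcls n (gen_ideal n K') (tmul (\<sigma> (qrep X)) (\<sigma> (qrep Y))) = qmul n (gen_ideal n K') (Phi X) (Phi Y)"
      unfolding qmul_def by (rule B.cong_mul) (use x y in auto)
    thus ?thesis using False eq1 eq2 by simp
  qed
qed

lemma Phi_iso: "\<not> op \<Longrightarrow> alg_iso n (gen_ideal n K) (gen_ideal n K') Phi"
  unfolding alg_iso_def using Phi_bij Phi_one Phi_add Phi_mul Phi_scale by simp

lemma Phi_iso_op: "op \<Longrightarrow> alg_iso_op n (gen_ideal n K) (gen_ideal n K') Phi"
  unfolding alg_iso_op_def using Phi_bij Phi_one Phi_add Phi_mul Phi_scale by simp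

lemma Phi_ex: "\<not> op \<Longrightarrow> \<exists>\<Phi>. alg_iso n (gen_ideal n K) (gen_ideal n K') \<Phi> \<and>
   (\<forall>f\<in>TV n. \<Phi> (qcls n (gen_ideal n K) f) = qcls n (gen_ideal n K') (\<sigma> f))"
  using Phi_iso Phi_cls by blast

lemma Phi_ex_op: "op \<Longrightarrow> \<exists>\<Phi>. alg_iso_op n (gen_ideal n K) (gen_ideal n K') \<Phi> \<and>
   (\<forall>f\<in>TV n. \<Phi> (qcls n (gen_ideal n K) f) = qcls n (gen_ideal n K') (\<sigma> f))"
  using Phi_iso_op Phi_cls by blast

end


definition sig :: "nat \<Rightarrow> (nat list \<Rightarrow> nat list) \<Rightarrow> (nat list \<Rightarrow> complex) \<Rightarrow> nat list \<Rightarrow> complex" where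
  "sig n \<pi> f = (\<lambda>w. if allb n w then f (\<pi> w) else 0)"

definition Nm where "Nm n = sig n (map (ng n))"
definition Rv where "Rv n = sig n rev"
definition Op where "Op n f = Rv n (Nm n f)"

lemma sig_TV:
  assumes P: "\<And>w. allb n w \<Longrightarrow> allb n (\<pi> w) \<and> \<pi> (\<pi> w) = w" and f: "f \<in> TV n"
  shows "sig n \<pi> f \<in> TV n"
proof -
  have sub: "{w. sig n \<pi> f w \<noteq> 0} \<subseteq> \<pi> ` {w. f w \<noteq> 0}"
  proof
    fix w assume "w \<in> {w. sig n \<pi> f w \<noteq> 0}"
    hence w: "allb n w" "f (\<pi> w) \<noteq> 0" unfolding sig_def by (auto split: if_splits)
    hence "w = \<pi> (\<pi> w)" using P by simp
    thus "w \<in> \<pi> ` {w. f w \<noteq> 0}" using w by blast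
  qed
  have "finite {w. f w \<noteq> 0}" using f unfolding TV_def by simp
  hence "finite {w. sig n \<pi> f w \<noteq> 0}" using finite_subset[OF sub] by blast
  moreover have "\<forall>w. sig n \<pi> f w \<noteq> 0 \<longrightarrow> (\<forall>x\<in>set w. x < n)"
    unfolding sig_def allb_def by auto
  ultimately show ?thesis unfolding TV_def by blast
qed

lemma sig_inv:
  assumes P: "\<And>w. allb n w \<Longrightarrow> allb n (\<pi> w) \<and> \<pi> (\<pi> w) = w" and f: "f \<in> TV n"
  shows "sig n \<pi> (sig n \<pi> f) = f"
proof
  fix w
  show "sig n \<pi> (sig n \<pi> f) w = f w"
  proof (cases "allb n w")
    case True thus ?thesis using P[OF True] unfolding sig_def by simp
  next
    case False
    hence "f w = 0" using TV_supp[OF f] by blast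
    thus ?thesis using False unfolding sig_def by simp
  qed
qed

lemma sig_zero: "sig n \<pi> (\<lambda>_. 0) = (\<lambda>_. 0)" unfolding sig_def by auto
lemma sig_add: "sig n \<pi> (\<lambda>w. f w + g w) = (\<lambda>w. sig n \<pi> f w + sig n \<pi> g w)" unfolding sig_def by auto
lemma sig_scale: "sig n \<pi> (\<lambda>w. c * f w) = (\<lambda>w. c * sig n \<pi> f w)" unfolding sig_def by auto

lemma sig_tone:
  assumes P: "\<And>w. allb n w \<Longrightarrow> allb n (\<pi> w) \<and> \<pi> (\<pi> w) = w" and e: "\<pi> [] = []"
  shows "sig n \<pi> tone = tone"
proof
  fix w show "sig n \<pi> tone w = tone w"
  proof (cases "allb n w")
    case True
    have "\<pi> w = [] \<longleftrightarrow> w = []" using P[OF True] e by metis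
    thus ?thesis using True unfolding sig_def tone_def by simp
  next
    case False
    hence "w \<noteq> []" unfolding allb_def by auto
    thus ?thesis using False unfolding sig_def tone_def by simp
  qed
qed

lemma allb_take_drop: "allb n w \<longleftrightarrow> allb n (take i w) \<and> allb n (drop i w)"
proof -
  have "set w = set (take i w) \<union> set (drop i w)" by (metis append_take_drop_id set_append)
  thus ?thesis unfolding allb_def by blast
qed

lemma Pmap: "n > 0 \<Longrightarrow> allb n w \<Longrightarrow> allb n (map (ng n) w) \<and> map (ng n) (map (ng n) w) = w"
  unfolding allb_def by (auto simp: ng_lt ng_ng intro!: map_idI)

lemma Prev: "allb n w \<Longrightarrow> allb n (rev w) \<and> rev (rev w) = w"
  unfolding allb_def by auto

lemma Nm_tmul: "Nm n (tmul f g) = tmul (Nm n f) (Nm n g)"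
proof
  fix w
  show "Nm n (tmul f g) w = tmul (Nm n f) (Nm n g) w"
  proof (cases "allb n w")
    case True
    have "tmul (Nm n f) (Nm n g) w = (\<Sum>i\<le>length w. f (take i (map (ng n) w)) * g (drop i (map (ng n) w)))"
      unfolding tmul_def Nm_def sig_def using True allb_take_drop[of n w]
      by (intro sum.cong) (auto simp: take_map drop_map)
    also have "\<dots> = tmul f g (map (ng n) w)" unfolding tmul_def by simp
    finally show ?thesis using True unfolding Nm_def sig_def by simp
  next
    case False
    have "tmul (Nm n f) (Nm n g) w = 0"
      unfolding tmul_def Nm_def sig_def using False allb_take_drop[of n w]
      by (intro sum.neutral) auto
    thus ?thesis using False unfolding Nm_def sig_def by simp
  qed
qed

lemma Rv_tmul: "Rv n (tmul f g) = tmul (Rv n g) (Rv n f)"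
proof
  fix w
  show "Rv n (tmul f g) w = tmul (Rv n g) (Rv n f) w"
  proof (cases "allb n w")
    case True
    define L where "L = length w"
    have b: "bij_betw (\<lambda>i. L - i) {..L} {..L}"
      by (rule bij_betwI[where g="\<lambda>i. L - i"]) auto
    have "tmul f g (rev w) = (\<Sum>i\<le>L. f (rev (drop (L - i) w)) * g (rev (take (L - i) w)))"
      unfolding tmul_def L_def by (simp add: take_rev drop_rev)
    also have "\<dots> = (\<Sum>i\<le>L. f (rev (drop i w)) * g (rev (take i w)))"
      using sum.reindex_bij_betw[OF b, of "\<lambda>i. f (rev (drop i w)) * g (rev (take i w))"] by simp
    also have "\<dots> = tmul (Rv n g) (Rv n f) w"
      unfolding tmul_def Rv_def sig_def L_def using True allb_take_drop[of n w]
      by (intro sum.cong) (auto simp: mult.commute)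
    finally show ?thesis using True unfolding Rv_def sig_def by simp
  next
    case False
    have "tmul (Rv n g) (Rv n f) w = 0"
      unfolding tmul_def Rv_def sig_def using False allb_take_drop[of n w]
      by (intro sum.neutral) auto
    thus ?thesis using False unfolding Rv_def sig_def by simp
  qed
qed

lemma Nm_Rv: "n > 0 \<Longrightarrow> Nm n (Rv n f) = Rv n (Nm n f)"
  unfolding Nm_def Rv_def sig_def by (rule ext) (auto simp: rev_map dest: Pmap Prev)

lemma good_Nm: "n > 0 \<Longrightarrow> good n (Nm n) False"
  unfolding good_def using sig_TV[OF Pmap] sig_inv[OF Pmap] sig_tone[OF Pmap] Nm_tmul
  unfolding Nm_def by (auto simp: sig_zero sig_add sig_scale)

lemma good_Rv: "good n (Rv n) True"
  unfolding good_def using sig_TV[OF Prev] sig_inv[OF Prev] sig_tone[OF Prev] Rv_tmul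
  unfolding Rv_def by (auto simp: sig_zero sig_add sig_scale)

lemma good_Op: "n > 0 \<Longrightarrow> good n (Op n) True"
proof -
  assume n: "n > 0"
  note N = goodD[OF good_Nm[OF n]] and R = goodD[OF good_Rv[of n]]
  show ?thesis unfolding good_def Op_def
  proof (intro conjI ballI allI)
    fix f assume f: "f \<in> TV n"
    show "Rv n (Nm n f) \<in> TV n" using N(1) R(1) f by blast
    have "Rv n (Nm n (Rv n (Nm n f))) = Rv n (Rv n (Nm n (Nm n f)))" using Nm_Rv[OF n] by simp
    also have "\<dots> = f" using N R f by simp
    finally show "Rv n (Nm n (Rv n (Nm n f))) = f" .
  next
    show "Rv n (Nm n (\<lambda>_. 0)) = (\<lambda>_. 0)" using N(3) R(3) by simp
  next
    fix f g show "Rv n (Nm n (\<lambda>w. f w + g w)) = (\<lambda>w. Rv n (Nm n f) w + Rv n (Nm n g) w)" using N(4) R(4) by simp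
  next
    fix c f show "Rv n (Nm n (\<lambda>w. c * f w)) = (\<lambda>w. c * Rv n (Nm n f) w)" using N(5) R(5) by simp
  next
    show "Rv n (Nm n tone) = tone" using N(6) R(6) by simp
  next
    fix f g assume "f \<in> TV n" "g \<in> TV n"
    show "Rv n (Nm n (tmul f g)) = (if True then tmul (Rv n (Nm n g)) (Rv n (Nm n f)) else tmul (Rv n (Nm n f)) (Rv n (Nm n g)))"
      by (simp add: Nm_tmul Rv_tmul)
  qed
qed


lemma bij_ng: "bij_betw (ng n) {..<n} {..<n}"
  by (rule bij_betwI[where g="ng n"]) (auto simp: ng_lt ng_ng)

lemma double_reindex: "(\<Sum>i<n. \<Sum>j<n. F (ng n i) (ng n j)) = (\<Sum>i<n. \<Sum>j<n. (F i j :: complex))"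
proof -
  have "(\<Sum>i<n. \<Sum>j<n. F (ng n i) (ng n j)) = (\<Sum>i<n. \<Sum>j<n. F (ng n i) j)"
  proof (rule sum.cong[OF refl])
    fix i show "(\<Sum>j<n. F (ng n i) (ng n j)) = (\<Sum>j<n. F (ng n i) j)"
      by (rule sum.reindex_bij_betw[OF bij_ng])
  qed
  also have "\<dots> = (\<Sum>i<n. \<Sum>j<n. F i j)"
    by (rule sum.reindex_bij_betw[OF bij_ng, where g = "\<lambda>i. \<Sum>j<n. F i j"])
  finally show ?thesis .
qed

lemma kerR_TV: "kerR n k \<eta> \<tau> \<subseteq> TV n" unfolding kerR_def by auto

lemma Nm_pair: "i < n \<Longrightarrow> j < n \<Longrightarrow> Nm n f [i, j] = f [ng n i, ng n j]"
  unfolding Nm_def sig_def allb_def by simp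

lemma Rv_pair: "i < n \<Longrightarrow> j < n \<Longrightarrow> Rv n f [i, j] = f [j, i]"
  unfolding Rv_def sig_def allb_def by simp

lemma Nm_ker:
  assumes n: "n > 0" and s: "Im \<eta> > 0" and f: "f \<in> kerR n k \<eta> \<tau>"
  shows "Nm n f \<in> kerR n k \<eta> (- \<tau>)"
proof -
  have fTV: "f \<in> TV n" and len: "\<And>w. f w \<noteq> 0 \<Longrightarrow> length w = 2"
    and sm: "\<And>a b. a < n \<Longrightarrow> b < n \<Longrightarrow> (\<Sum>i<n. \<Sum>j<n. Rrel n k \<eta> \<tau> a b i j * f [i, j]) = 0"
    using f unfolding kerR_def by auto
  have "Nm n f \<in> TV n" using goodD(1)[OF good_Nm[OF n] fTV] .
  moreover have "length w = 2" if "Nm n f w \<noteq> 0" for w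
  proof -
    have "f (map (ng n) w) \<noteq> 0" using that unfolding Nm_def sig_def by (auto split: if_splits)
    thus ?thesis using len by fastforce
  qed
  moreover have "(\<Sum>i<n. \<Sum>j<n. Rrel n k \<eta> (- \<tau>) a b i j * Nm n f [i, j]) = 0" if ab: "a < n" "b < n" for a b
  proof -
    define c where "c = e (of_nat n ^ 2 * \<tau>)"
    have "(\<Sum>i<n. \<Sum>j<n. Rrel n k \<eta> (- \<tau>) a b i j * Nm n f [i, j])
        = (\<Sum>i<n. \<Sum>j<n. Rrel n k \<eta> (- \<tau>) a b i j * f [ng n i, ng n j])"
      by (intro sum.cong refl) (simp add: Nm_pair)
    also have "\<dots> = (\<Sum>i<n. \<Sum>j<n. Rrel n k \<eta> (- \<tau>) a b (ng n i) (ng n j) * f [i, j])"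
    proof -
      have "(\<Sum>i<n. \<Sum>j<n. Rrel n k \<eta> (- \<tau>) a b (ng n i) (ng n j) * f [i, j])
         = (\<Sum>i<n. \<Sum>j<n. Rrel n k \<eta> (- \<tau>) a b (ng n (ng n i)) (ng n (ng n j)) * f [ng n i, ng n j])"
        by (rule double_reindex[where F="\<lambda>i j. Rrel n k \<eta> (- \<tau>) a b (ng n i) (ng n j) * f [i, j]", symmetric])
      also have "\<dots> = (\<Sum>i<n. \<Sum>j<n. Rrel n k \<eta> (- \<tau>) a b i j * f [ng n i, ng n j])"
        by (intro sum.cong refl) (simp add: ng_ng)
      finally show ?thesis by simp
    qed
    also have "\<dots> = (\<Sum>i<n. \<Sum>j<n. c * (Rrel n k \<eta> \<tau> (ng n a) (ng n b) i j * f [i, j]))"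
    proof (intro sum.cong refl)
      fix i j assume "i \<in> {..<n}" "j \<in> {..<n}"
      hence "Rrel n k \<eta> (- \<tau>) (ng n (ng n a)) (ng n (ng n b)) (ng n i) (ng n j) = c * Rrel n k \<eta> \<tau> (ng n a) (ng n b) i j"
        using Rrel_rel[OF n s, of "ng n a" "ng n b" i j k \<tau>] ng_lt[OF n] unfolding c_def by auto
      thus "Rrel n k \<eta> (- \<tau>) a b (ng n i) (ng n j) * f [i, j] = c * (Rrel n k \<eta> \<tau> (ng n a) (ng n b) i j * f [i, j])"
        using ab by (simp add: ng_ng)
    qed
    also have "\<dots> = c * (\<Sum>i<n. \<Sum>j<n. Rrel n k \<eta> \<tau> (ng n a) (ng n b) i j * f [i, j])"
      by (simp add: sum_distrib_left)
    also have "\<dots> = 0" using sm[of "ng n a" "ng n b"] ng_lt[OF n] by simp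
    finally show ?thesis .
  qed
  ultimately show ?thesis unfolding kerR_def by blast
qed

lemma Rv_ker:
  assumes n: "n > 0" and s: "Im \<eta> > 0" and f: "f \<in> kerR n k \<eta> \<tau>"
  shows "Rv n f \<in> kerR n k \<eta> (- \<tau>)"
proof -
  have fTV: "f \<in> TV n" and len: "\<And>w. f w \<noteq> 0 \<Longrightarrow> length w = 2"
    and sm: "\<And>a b. a < n \<Longrightarrow> b < n \<Longrightarrow> (\<Sum>i<n. \<Sum>j<n. Rrel n k \<eta> \<tau> a b i j * f [i, j]) = 0"
    using f unfolding kerR_def by auto
  have "Rv n f \<in> TV n" using goodD(1)[OF good_Rv fTV] .
  moreover have "length w = 2" if "Rv n f w \<noteq> 0" for w
  proof -
    have "f (rev w) \<noteq> 0" using that unfolding Rv_def sig_def by (auto split: if_splits)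
    thus ?thesis using len by fastforce
  qed
  moreover have "(\<Sum>i<n. \<Sum>j<n. Rrel n k \<eta> (- \<tau>) a b i j * Rv n f [i, j]) = 0" if ab: "a < n" "b < n" for a b
  proof -
    define c where "c = e (of_nat n ^ 2 * \<tau>)"
    have "(\<Sum>i<n. \<Sum>j<n. Rrel n k \<eta> (- \<tau>) a b i j * Rv n f [i, j])
        = (\<Sum>i<n. \<Sum>j<n. Rrel n k \<eta> (- \<tau>) a b i j * f [j, i])"
      by (intro sum.cong refl) (simp add: Rv_pair)
    also have "\<dots> = (\<Sum>j<n. \<Sum>i<n. Rrel n k \<eta> (- \<tau>) a b i j * f [j, i])"
      by (rule sum.swap)
    also have "\<dots> = (\<Sum>j<n. \<Sum>i<n. c * (Rrel n k \<eta> \<tau> b a j i * f [j, i]))"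
    proof (intro sum.cong refl)
      fix i j assume "i \<in> {..<n}" "j \<in> {..<n}"
      hence "Rrel n k \<eta> (- \<tau>) a b i j = c * Rrel n k \<eta> \<tau> b a j i"
        using Rrel_rel[OF n s, of b a j i k \<tau>] ab unfolding c_def by auto
      thus "Rrel n k \<eta> (- \<tau>) a b i j * f [j, i] = c * (Rrel n k \<eta> \<tau> b a j i * f [j, i])" by simp
    qed
    also have "\<dots> = c * (\<Sum>j<n. \<Sum>i<n. Rrel n k \<eta> \<tau> b a j i * f [j, i])"
      by (simp add: sum_distrib_left)
    also have "\<dots> = 0" using sm[of b a] ab by simp
    finally show ?thesis .
  qed
  ultimately show ?thesis unfolding kerR_def by blast
qed

lemma ker_image:
  assumes G: "good n \<sigma> op" and mp: "\<And>f \<tau>. f \<in> kerR n k \<eta> \<tau> \<Longrightarrow> \<sigma> f \<in> kerR n k \<eta> (- \<tau>)"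
  shows "\<sigma> ` kerR n k \<eta> \<tau> = kerR n k \<eta> (- \<tau>)"
proof
  show "\<sigma> ` kerR n k \<eta> \<tau> \<subseteq> kerR n k \<eta> (- \<tau>)" using mp by blast
  show "kerR n k \<eta> (- \<tau>) \<subseteq> \<sigma> ` kerR n k \<eta> \<tau>"
  proof
    fix g assume g: "g \<in> kerR n k \<eta> (- \<tau>)"
    have "\<sigma> g \<in> kerR n k \<eta> (- (- \<tau>))" by (rule mp[OF g])
    moreover have "g = \<sigma> (\<sigma> g)"
    proof -
      have "g \<in> TV n" using kerR_TV g by blast
      thus ?thesis using goodD(2)[OF G] by simp
    qed
    ultimately show "g \<in> \<sigma> ` kerR n k \<eta> \<tau>" by auto
  qed
qed


lemma Nm_xgen:
  assumes a: "\<alpha> < n"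
  shows "Nm n (xgen \<alpha>) = xgen (ng n \<alpha>)"
proof
  fix w
  have n: "n > 0" using a by simp
  show "Nm n (xgen \<alpha>) w = xgen (ng n \<alpha>) w"
  proof (cases "allb n w \<and> map (ng n) w = [\<alpha>]")
    case True
    have "w = map (ng n) (map (ng n) w)" by (rule sym, rule conjunct2[OF Pmap[OF n]]) (use True in blast)
    also have "\<dots> = map (ng n) [\<alpha>]" using True by simp
    finally have "w = [ng n \<alpha>]" by simp
    thus ?thesis using True unfolding Nm_def sig_def xgen_def by simp
  next
    case False
    have "w \<noteq> [ng n \<alpha>]"
    proof
      assume w: "w = [ng n \<alpha>]"
      hence "allb n w" unfolding allb_def using ng_lt[OF n] by simp
      moreover have "map (ng n) w = [\<alpha>]" using w ng_ng[OF a] by simp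
      ultimately show False using False by simp
    qed
    thus ?thesis using False unfolding Nm_def sig_def xgen_def by auto
  qed
qed

lemma Rv_xgen: "\<alpha> < n \<Longrightarrow> Rv n (xgen \<alpha>) = xgen \<alpha>"
  unfolding Rv_def sig_def xgen_def allb_def by (rule ext) auto

lemma trev_Rv: "f \<in> TV n \<Longrightarrow> trev f = Rv n f"
proof
  fix w assume f: "f \<in> TV n"
  show "trev f w = Rv n f w"
  proof (cases "allb n w")
    case True thus ?thesis unfolding trev_def Rv_def sig_def by simp
  next
    case False
    hence "\<not> allb n (rev w)" unfolding allb_def by simp
    hence "f (rev w) = 0" using TV_supp[OF f] by blast
    thus ?thesis using False unfolding trev_def Rv_def sig_def by simp
  qed
qed

theorem proposition7p1:
  fixes n k :: nat and \<eta> \<tau> :: complex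
  assumes "1 \<le> k" and "k < n" and "coprime n k" and "Im \<eta> > 0"
  shows "(\<exists>\<Phi>. alg_iso n (Sideal n k \<eta> \<tau>) (Sideal n k \<eta> (- \<tau>)) \<Phi>
               \<and> extends_N n (Sideal n k \<eta> \<tau>) (Sideal n k \<eta> (- \<tau>)) \<Phi>)
       \<and> (\<exists>\<Phi>. alg_iso_op n (Sideal n k \<eta> \<tau>) (Sideal n k \<eta> \<tau>) \<Phi>
               \<and> extends_N n (Sideal n k \<eta> \<tau>) (Sideal n k \<eta> \<tau>) \<Phi>)
       \<and> trev ` Sideal n k \<eta> \<tau> = Sideal n k \<eta> (- \<tau>)"
proof -
  have n: "n > 0" using assms by simp
  have s: "Im \<eta> > 0" using assms by simp
  have KT: "\<And>t. kerR n k \<eta> t \<subseteq> TV n" by (rule kerR_TV)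
  have NK: "\<And>t. Nm n ` kerR n k \<eta> t = kerR n k \<eta> (- t)"
    by (rule ker_image[OF good_Nm[OF n]]) (rule Nm_ker[OF n s])
  have RK: "\<And>t. Rv n ` kerR n k \<eta> t = kerR n k \<eta> (- t)"
    by (rule ker_image[OF good_Rv]) (rule Rv_ker[OF n s])
  have OK: "Op n ` kerR n k \<eta> \<tau> = kerR n k \<eta> \<tau>"
  proof -
    have "Op n ` kerR n k \<eta> \<tau> = Rv n ` Nm n ` kerR n k \<eta> \<tau>" unfolding Op_def image_image ..
    also have "\<dots> = kerR n k \<eta> (- (- \<tau>))" unfolding NK RK ..
    finally show ?thesis by simp
  qed
  have NI: "Nm n ` Sideal n k \<eta> \<tau> = Sideal n k \<eta> (- \<tau>)"
    unfolding Sideal_def by (rule ideal_map[OF good_Nm[OF n] KT NK])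
  have RI: "Rv n ` Sideal n k \<eta> \<tau> = Sideal n k \<eta> (- \<tau>)"
    unfolding Sideal_def by (rule ideal_map[OF good_Rv KT RK])
  have OI: "Op n ` Sideal n k \<eta> \<tau> = Sideal n k \<eta> \<tau>"
    unfolding Sideal_def by (rule ideal_map[OF good_Op[OF n] KT OK])
  have P1: "\<exists>\<Phi>. alg_iso n (Sideal n k \<eta> \<tau>) (Sideal n k \<eta> (- \<tau>)) \<Phi>
               \<and> extends_N n (Sideal n k \<eta> \<tau>) (Sideal n k \<eta> (- \<tau>)) \<Phi>"
  proof -
    obtain \<Phi> where iso: "alg_iso n (Sideal n k \<eta> \<tau>) (Sideal n k \<eta> (- \<tau>)) \<Phi>"
      and cl: "\<forall>f\<in>TV n. \<Phi> (qcls n (Sideal n k \<eta> \<tau>) f) = qcls n (Sideal n k \<eta> (- \<tau>)) (Nm n f)"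
      using Phi_ex[OF good_Nm[OF n] KT KT NI[unfolded Sideal_def]] unfolding Sideal_def by auto
    have "extends_N n (Sideal n k \<eta> \<tau>) (Sideal n k \<eta> (- \<tau>)) \<Phi>"
      unfolding extends_N_def using cl TV_xgen Nm_xgen by (simp add: ng_def)
    thus ?thesis using iso by blast
  qed
  have P2: "\<exists>\<Phi>. alg_iso_op n (Sideal n k \<eta> \<tau>) (Sideal n k \<eta> \<tau>) \<Phi>
               \<and> extends_N n (Sideal n k \<eta> \<tau>) (Sideal n k \<eta> \<tau>) \<Phi>"
  proof -
    obtain \<Phi> where iso: "alg_iso_op n (Sideal n k \<eta> \<tau>) (Sideal n k \<eta> \<tau>) \<Phi>"
      and cl: "\<forall>f\<in>TV n. \<Phi> (qcls n (Sideal n k \<eta> \<tau>) f) = qcls n (Sideal n k \<eta> \<tau>) (Op n f)"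
      using Phi_ex_op[OF good_Op[OF n] KT KT OI[unfolded Sideal_def]] unfolding Sideal_def by auto
    have "extends_N n (Sideal n k \<eta> \<tau>) (Sideal n k \<eta> \<tau>) \<Phi>"
      unfolding extends_N_def using cl TV_xgen Nm_xgen Rv_xgen ng_lt[OF n] by (simp add: ng_def Op_def)
    thus ?thesis using iso by blast
  qed
  have P3: "trev ` Sideal n k \<eta> \<tau> = Sideal n k \<eta> (- \<tau>)"
  proof -
    have "trev ` Sideal n k \<eta> \<tau> = Rv n ` Sideal n k \<eta> \<tau>"
      by (rule image_cong[OF refl]) (use trev_Rv gen_ideal_TV[OF KT] in \<open>auto simp: Sideal_def\<close>)
    thus ?thesis using RI by simp
  qed
  show ?thesis using P1 P2 P3 by blast
qed


end
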